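(* If $$\sup_{i \in \mathbf{I}} \sum_{v \in \mathbf{V}^{i}} P(v) \lambda^i(v) =: \gamma < 1,$$ then the Backward steps in the Perfect Simulation algorithm terminate almost surely in finite time, i.e. $N^{(i,T)} = \inf\{n : \mathcal{C}_n^{(i,T)} = \emptyset\} < \infty$ almost surely.
   Context: Setting: $\mathbf{I}$ is a countable index set and $Z=(Z^i)_{i\in\mathbf{I}}$ is a time homogeneous multivariate counting process with generic intensities $\phi^i$. A neighborhood is a Borel subset of $\mathbf{I}\times(-\infty,0)$; it is finite if it is contained in $J\times[a,b]$ with $J\subset\mathbf{I}$ finite and $[a,b]$ a finite interval. For each $i$, $\mathbf{V}^i$ is a countable family of finite neighborhoods, $\lambda^i$ is a probability on $\mathbf{V}^i$, and $Z$ admits a Kalikow decomposition $\phi^i=\sum_{v\in\mathbf{V}^i}\lambda^i(v)\phi^i_v$ (on a subspace $\mathcal{Y}$ of past configurations) with $\phi^i_v$ cylindrical on $v$, where all $\phi^i$ and $\phi^i_v$ are bounded by finite deterministic constants $\Gamma^i>0$. Define the measure $P$ on Borel subsets of $\mathbf{I}\times\mathbb{R}$ by $P(J\times A)=\sum_{j\in J}\Gamma^j\,\mu(A)$ for $J\subset\mathbf{I}$ and $A$ a Borel subset of $\mathbb{R}$, where $\mu$ is Lebesgue measure. Backward procedure of the Perfect Simulation algorithm: the $N^j$, $j\in\mathbf{I}$, are independent homogeneous Poisson processes on $\mathbb{R}$ with intensity $\Gamma^j$. Starting from a point $T$ of $N^i$, pick (independently of everything else) a random neighborhood $V^i_T$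 with $\mathbb{P}(V^i_T=v)=\lambda^i(v)$; let $v^{\rightarrow T}=\{(j,u+T):(j,u)\in v\}$ and $p_j(v^{\rightarrow T})=\{t:(j,t)\in v^{\rightarrow T}\}$. The first set of ancestors is $\mathcal{C}_1^{(i,T)}=\bigcup_{j\in\mathbf{I}}\{(j,t): t\in p_j(v^{\rightarrow T}) \text{ is a jump of } N^j\}$ (Poisson points are only newly simulated on portions of $\mathbf{I}\times\mathbb{R}$ not visited before). Recursively, $\mathcal{C}_n^{(i,T)}=\bigcup_{(j,s)\in\mathcal{C}_{n-1}^{(i,T)}}\mathcal{C}_1^{(j,s)}\setminus(\mathcal{C}_1^{(i,T)}\cup\dots\cup\mathcal{C}_{n-1}^{(i,T)})$, obtained by repeating the neighborhood choice and Poisson sampling for each point of generation $n-1$. The backward steps stop at $N^{(i,T)}=\inf\{n:\mathcal{C}_n^{(i,T)}=\emptyset\}$ ($\inf\emptyset=+\infty$). *)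

theory Defs
  imports "HOL-Probability.Probability"
begin

text \<open>Neighborhoods: Borel subsets of I x (-infinity,0). Since I is countable and carries
  the discrete structure, a subset of I x R is Borel iff every section is Borel.\<close>
definition neighborhood :: "('i \<times> real) set \<Rightarrow> bool" where
  "neighborhood v \<longleftrightarrow> (\<forall>j. {t. (j, t) \<in> v} \<in> sets borel) \<and> v \<subseteq> UNIV \<times> {..<0}"

definition finite_neighborhood :: "('i \<times> real) set \<Rightarrow> bool" where
  "finite_neighborhood v \<longleftrightarrow> neighborhood v \<and>
     (\<exists>J a b. finite J \<and> v \<subseteq> J \<times> {a..b})"

text \<open>The measure P on I x R: P(S) = sum over j of Gamma^j times the Lebesgue measure of
  the j-section of S (so that P(J x A) = sum_{j in J} Gamma^j mu(A)).\<close>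
definition Pmeas :: "('i \<Rightarrow> real) \<Rightarrow> ('i \<times> real) set \<Rightarrow> ennreal" where
  "Pmeas \<Gamma> S = (\<Sum>\<^sub>\<infinity> j. ennreal (\<Gamma> j) * emeasure lborel {t. (j, t) \<in> S})"

text \<open>Index of a point t of a locally finite point configuration N \<subseteq> R:
  the points in (0,inf) get indices 1,2,3,... in increasing order, the points in (-inf,0]
  get indices 0,-1,-2,... in decreasing order. Used to attach to every point its own,
  independently chosen neighborhood.\<close>
definition point_index :: "real set \<Rightarrow> real \<Rightarrow> int" where
  "point_index N t = (if 0 < t then int (card (N \<inter> {0<..t})) else 1 - int (card (N \<inter> {t..0})))"

text \<open>Probabilistic setting of the backward procedure:
  N j are independent homogeneous Poisson processes on R with intensity Gamma j
  (given by their random, locally finite, sets of jump times), and Mk j k are the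
  neighborhood choices attached to the k-th point of N j: i.i.d. with law lam j,
  independent of everything else.\<close>
definition poisson_with_choices ::
  "'w measure \<Rightarrow> ('i \<Rightarrow> real) \<Rightarrow> ('i \<Rightarrow> ('i \<times> real) set pmf)
     \<Rightarrow> ('i \<Rightarrow> 'w \<Rightarrow> real set) \<Rightarrow> ('i \<Rightarrow> int \<Rightarrow> 'w \<Rightarrow> ('i \<times> real) set) \<Rightarrow> bool" where
  "poisson_with_choices M \<Gamma> lam N Mk \<longleftrightarrow>
     prob_space M \<and>
     (\<forall>j \<omega> A. bounded A \<longrightarrow> finite (N j \<omega> \<inter> A)) \<and>
     (\<forall>j A. A \<in> sets borel \<and> bounded A \<longrightarrow>
        (\<lambda>\<omega>. card (N j \<omega> \<inter> A)) \<in> M \<rightarrow>\<^sub>M count_space UNIV \<and>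
        (\<forall>k. measure M {\<omega> \<in> space M. card (N j \<omega> \<inter> A) = k}
              = (\<Gamma> j * measure lborel A) ^ k / fact k * exp (- (\<Gamma> j * measure lborel A)))) \<and>
     (\<forall>j k. Mk j k \<in> M \<rightarrow>\<^sub>M count_space UNIV \<and>
        (\<forall>v. measure M {\<omega> \<in> space M. Mk j k \<omega> = v} = pmf (lam j) v)) \<and>
     (\<forall>\<A>. \<A> \<subseteq> {(j, A). A \<in> sets borel \<and> bounded A} \<and>
          (\<forall>j A B. (j, A) \<in> \<A> \<and> (j, B) \<in> \<A> \<and> A \<noteq> B \<longrightarrow> A \<inter> B = {}) \<longrightarrow>
        prob_space.indep_vars M (\<lambda>_. count_space UNIV)
          (\<lambda>x \<omega>. case x of Inl (j, A) \<Rightarrow> Inl (card (N j \<omega> \<inter> A))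
                         | Inr (j, k) \<Rightarrow> Inr (Mk j k \<omega>))
          (Inl ` \<A> \<union> range Inr))"

definition first_ancestors ::
  "('i \<Rightarrow> 'w \<Rightarrow> real set) \<Rightarrow> ('i \<Rightarrow> int \<Rightarrow> 'w \<Rightarrow> ('i \<times> real) set) \<Rightarrow> 'w
     \<Rightarrow> 'i \<times> real \<Rightarrow> ('i \<times> real) set" where
  "first_ancestors N Mk \<omega> x =
     (case x of (j, s) \<Rightarrow>
        {(j', t). t \<in> N j' \<omega> \<and> (j', t - s) \<in> Mk j (point_index (N j \<omega>) s) \<omega>})"

text \<open>gen_pair C1 x n = (C_n, C_1 \<union> ... \<union> C_n), with C_0 = {x}.\<close>
primrec gen_pair :: "('a \<Rightarrow> 'a set) \<Rightarrow> 'a \<Rightarrow> nat \<Rightarrow> 'a set \<times> 'a set" where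
  "gen_pair C1 x 0 = ({x}, {})"
| "gen_pair C1 x (Suc n) =
     (let (c, vis) = gen_pair C1 x n; new = (\<Union>y\<in>c. C1 y) - vis in (new, vis \<union> new))"

definition ancestor_gen :: "('a \<Rightarrow> 'a set) \<Rightarrow> 'a \<Rightarrow> nat \<Rightarrow> 'a set" where
  "ancestor_gen C1 x n = fst (gen_pair C1 x n)"

definition backward_steps :: "('a \<Rightarrow> 'a set) \<Rightarrow> 'a \<Rightarrow> enat" where
  "backward_steps C1 x =
     (if \<exists>n. ancestor_gen C1 x n = {} then enat (LEAST n. ancestor_gen C1 x n = {}) else \<infinity>)"

end

theory Submission
  imports Defs
begin

definition cell :: "real \<Rightarrow> int \<Rightarrow> real set" where
  "cell \<delta> l = {of_int l * \<delta> <.. (of_int l + 1) * \<delta>}"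

definition Ixf :: "(int \<Rightarrow> nat) \<Rightarrow> int \<Rightarrow> int set" where
  "Ixf cv l = (if 0 \<le> l then {int (\<Sum>l'\<in>{0..<l}. cv l') + 1 .. int (\<Sum>l'\<in>{0..<l}. cv l') + int (cv l)}
               else {1 - int (\<Sum>l'\<in>{l..<0}. cv l') .. - int (\<Sum>l'\<in>{l+1..<0}. cv l')})"

lemma Ixf_cong: "(\<And>l'. l' \<in> {min l 0..max l 0} \<Longrightarrow> cv l' = cv' l') \<Longrightarrow> Ixf cv l = Ixf cv' l"
  unfolding Ixf_def by (auto intro!: sum.cong)

lemma card_Ixf: "card (Ixf cv l) = cv l"
proof (cases "0 \<le> l")
  case True then show ?thesis by (simp add: Ixf_def)
next
  case False
  have "{l..<0} = insert l {l+1..<0}" using False by auto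
  then have "(\<Sum>l'\<in>{l..<0}. cv l') = cv l + (\<Sum>l'\<in>{l+1..<0}. cv l')" by simp
  then show ?thesis using False by (simp add: Ixf_def)
qed

lemma finite_Ixf: "finite (Ixf cv l)" by (simp add: Ixf_def)


lemma Ixf_disj: assumes "l \<noteq> l'" shows "Ixf cv l \<inter> Ixf cv l' = {}"
proof -
  { fix l l' :: int assume ll: "l < l'"
    have "Ixf cv l \<inter> Ixf cv l' = {}"
    proof (cases "0 \<le> l")
      case True
      have "(\<Sum>l'\<in>{0..<l+1}. cv l') \<le> (\<Sum>l'\<in>{0..<l'}. cv l')"
        by (rule sum_mono2) (use ll in auto)
      moreover have "{0..<l+1} = insert l {0..<l}" using True by auto
      ultimately have "(\<Sum>l'\<in>{0..<l}. cv l') + cv l \<le> (\<Sum>l'\<in>{0..<l'}. cv l')" by simp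
      then have "int (\<Sum>l'\<in>{0..<l}. cv l') + int (cv l) \<le> int (\<Sum>l'\<in>{0..<l'}. cv l')" by linarith
      then show ?thesis using True ll unfolding Ixf_def by (auto simp del: of_nat_sum)
    next
      case False
      show ?thesis
      proof (cases "0 \<le> l'")
        case True then show ?thesis using False unfolding Ixf_def by (auto simp del: of_nat_sum)
      next
        case F2: False
        have "(\<Sum>l'\<in>{l'..<0}. cv l') \<le> (\<Sum>l'\<in>{l+1..<0}. cv l')"
          by (rule sum_mono2) (use ll in auto)
        then have "int (\<Sum>l'\<in>{l'..<0}. cv l') \<le> int (\<Sum>l'\<in>{l+1..<0}. cv l')" by linarith
        then show ?thesis using False F2 unfolding Ixf_def by (auto simp del: of_nat_sum)
      qed
    qed }
  from this[of l l'] this[of l' l] assms show ?thesis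
    by (cases "l < l'") (auto simp: Int_commute)
qed

lemma cell_of: assumes "0 < \<delta>" shows "s \<in> cell \<delta> (\<lceil>s / \<delta>\<rceil> - 1)"
proof -
  have a: "s / \<delta> \<le> of_int \<lceil>s / \<delta>\<rceil>" by simp
  have b: "of_int \<lceil>s / \<delta>\<rceil> < s / \<delta> + 1" by linarith
  from mult_right_mono[OF a, of \<delta>] have "s \<le> of_int \<lceil>s / \<delta>\<rceil> * \<delta>" using assms by simp
  moreover from mult_strict_right_mono[OF b assms] have "(of_int \<lceil>s / \<delta>\<rceil> - 1) * \<delta> < s" using assms
    by (simp add: algebra_simps)
  ultimately show ?thesis unfolding cell_def by auto
qed

lemma cell_disj: "0 < \<delta> \<Longrightarrow> l \<noteq> l' \<Longrightarrow> cell \<delta> l \<inter> cell \<delta> l' = {}"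
proof -
  assume d: "0 < \<delta>" and ne: "l \<noteq> l'"
  { fix x assume x: "x \<in> cell \<delta> l" "x \<in> cell \<delta> l'"
    then have "of_int l * \<delta> < (of_int l' + 1) * \<delta>" "of_int l' * \<delta> < (of_int l + 1) * \<delta>"
      unfolding cell_def by auto
    then have "of_int l < (of_int l' + 1::real)" "of_int l' < (of_int l + 1::real)"
      using d by (simp_all add: mult_less_cancel_right)
    then have "l < l' + 1" "l' < l + 1" by linarith+
    then have False using ne by auto }
  then show ?thesis by auto
qed

locale bw = prob_space M for M :: "'w measure" +
  fixes \<Gamma> :: "'i::countable \<Rightarrow> real"
    and lam :: "'i \<Rightarrow> ('i \<times> real) set pmf"
    and N :: "'i \<Rightarrow> 'w \<Rightarrow> real set"
    and Mk :: "'i \<Rightarrow> int \<Rightarrow> 'w \<Rightarrow> ('i \<times> real) set"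
    and U :: "('i \<times> real) set \<Rightarrow> 'i \<Rightarrow> real set"
    and q :: real
  assumes Gpos: "\<And>j. 0 < \<Gamma> j"
    and setting: "poisson_with_choices M \<Gamma> lam N Mk"
    and U_open: "\<And>v j. open (U v j)"
    and U_neg: "\<And>v j. U v j \<subseteq> {..<0}"
    and U_sup: "\<And>j v j'. v \<in> set_pmf (lam j) \<Longrightarrow> {t. (j', t) \<in> v} \<subseteq> U v j'"
    and U_bound: "\<And>j. (\<integral>\<^sup>+v. ennreal (pmf (lam j) v) *
         (\<integral>\<^sup>+j'. ennreal (\<Gamma> j') * emeasure lborel (U v j') \<partial>count_space UNIV)
         \<partial>count_space (set_pmf (lam j))) \<le> ennreal q"
    and q_nonneg: "0 \<le> q" and q_lt: "q < 1"
begin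

lemma S1: "\<forall>j \<omega> A. bounded A \<longrightarrow> finite (N j \<omega> \<inter> A)"
  using setting[unfolded poisson_with_choices_def] by (rule conjunct1[OF conjunct2])

lemma S2: "\<forall>j A. A \<in> sets borel \<and> bounded A \<longrightarrow>
        (\<lambda>\<omega>. card (N j \<omega> \<inter> A)) \<in> M \<rightarrow>\<^sub>M count_space UNIV \<and>
        (\<forall>k. measure M {\<omega> \<in> space M. card (N j \<omega> \<inter> A) = k}
              = (\<Gamma> j * measure lborel A) ^ k / fact k * exp (- (\<Gamma> j * measure lborel A)))"
  using setting[unfolded poisson_with_choices_def] by (rule conjunct1[OF conjunct2[OF conjunct2]])

lemma S3: "\<forall>j k. Mk j k \<in> M \<rightarrow>\<^sub>M count_space UNIV \<and>
        (\<forall>v. measure M {\<omega> \<in> space M. Mk j k \<omega> = v} = pmf (lam j) v)"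
  using setting[unfolded poisson_with_choices_def] by (rule conjunct1[OF conjunct2[OF conjunct2[OF conjunct2]]])

lemma S4: "\<forall>\<A>. \<A> \<subseteq> {(j, A). A \<in> sets borel \<and> bounded A} \<and>
          (\<forall>j A B. (j, A) \<in> \<A> \<and> (j, B) \<in> \<A> \<and> A \<noteq> B \<longrightarrow> A \<inter> B = {}) \<longrightarrow>
        prob_space.indep_vars M (\<lambda>_. count_space UNIV)
          (\<lambda>x \<omega>. case x of Inl (j, A) \<Rightarrow> Inl (card (N j \<omega> \<inter> A))
                         | Inr (j, k) \<Rightarrow> Inr (Mk j k \<omega>))
          (Inl ` \<A> \<union> range Inr)"
  using setting[unfolded poisson_with_choices_def] by (rule conjunct2[OF conjunct2[OF conjunct2[OF conjunct2]]])

lemma locfin: "bounded A \<Longrightarrow> finite (N j \<omega> \<inter> A)"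
  using S1 by blast

lemma card_meas: "A \<in> sets borel \<Longrightarrow> bounded A \<Longrightarrow>
   (\<lambda>\<omega>. card (N j \<omega> \<inter> A)) \<in> M \<rightarrow>\<^sub>M count_space UNIV"
  using S2 by blast

lemma card_law: "A \<in> sets borel \<Longrightarrow> bounded A \<Longrightarrow>
   measure M {\<omega> \<in> space M. card (N j \<omega> \<inter> A) = k}
     = (\<Gamma> j * measure lborel A) ^ k / fact k * exp (- (\<Gamma> j * measure lborel A))"
  using S2 by blast

lemma Mk_meas: "Mk j k \<in> M \<rightarrow>\<^sub>M count_space UNIV"
  using S3 by blast

lemma Mk_law: "measure M {\<omega> \<in> space M. Mk j k \<omega> = v} = pmf (lam j) v"
  using S3 by blast

definition Xv :: "('i \<times> real set) + ('i \<times> int) \<Rightarrow> 'w \<Rightarrow> nat + ('i \<times> real) set" where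
  "Xv x \<omega> = (case x of Inl (j, A) \<Rightarrow> Inl (card (N j \<omega> \<inter> A))
                         | Inr (j, k) \<Rightarrow> Inr (Mk j k \<omega>))"

lemma indep: "\<A> \<subseteq> {(j, A). A \<in> sets borel \<and> bounded A} \<Longrightarrow>
    (\<And>j A B. (j, A) \<in> \<A> \<Longrightarrow> (j, B) \<in> \<A> \<Longrightarrow> A \<noteq> B \<Longrightarrow> A \<inter> B = {}) \<Longrightarrow>
    indep_vars (\<lambda>_. count_space UNIV) Xv (Inl ` \<A> \<union> range Inr)"
proof -
  assume a: "\<A> \<subseteq> {(j, A). A \<in> sets borel \<and> bounded A}"
    and b: "\<And>j A B. (j, A) \<in> \<A> \<Longrightarrow> (j, B) \<in> \<A> \<Longrightarrow> A \<noteq> B \<Longrightarrow> A \<inter> B = {}"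
  have "\<A> \<subseteq> {(j, A). A \<in> sets borel \<and> bounded A} \<and>
          (\<forall>j A B. (j, A) \<in> \<A> \<and> (j, B) \<in> \<A> \<and> A \<noteq> B \<longrightarrow> A \<inter> B = {})"
    using a b by blast
  from S4[rule_format, OF this] show ?thesis unfolding Xv_def[abs_def] .
qed

definition cnt :: "real \<Rightarrow> 'i \<Rightarrow> int \<Rightarrow> 'w \<Rightarrow> nat" where
  "cnt \<delta> j l \<omega> = card (N j \<omega> \<inter> cell \<delta> l)"

definition Ix :: "real \<Rightarrow> 'i \<Rightarrow> int \<Rightarrow> 'w \<Rightarrow> int set" where
  "Ix \<delta> j l \<omega> = Ixf (\<lambda>l'. cnt \<delta> j l' \<omega>) l"

lemma bounded_Ioc: "bounded {a<..(b::real)}"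
  by (rule bounded_subset[OF compact_imp_bounded[OF compact_Icc[of a b]]]) auto

lemma bounded_cell: "bounded (cell \<delta> l)"
  unfolding cell_def by (rule bounded_Ioc)

lemma borel_cell: "cell \<delta> l \<in> sets borel"
  unfolding cell_def by simp

lemma finite_cell: "finite (N j \<omega> \<inter> cell \<delta> l)"
  by (rule locfin[OF bounded_cell])

lemma card_N_ivl:
  assumes d: "0 < \<delta>" and ab: "a \<le> b"
  shows "card (N j \<omega> \<inter> {of_int a * \<delta> <.. of_int b * \<delta>}) = (\<Sum>l\<in>{a..<b}. cnt \<delta> j l \<omega>)"
  using ab
proof (induction b rule: int_ge_induct)
  case base then show ?case by simp
next
  case (step b)
  have ab: "of_int a * \<delta> \<le> of_int b * \<delta>" using step.hyps d by simp
  have tr: "\<And>x. of_int b * \<delta> < x \<Longrightarrow> of_int a * \<delta> < x" using ab by linarith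
  have tr2: "\<And>x. x \<le> of_int b * \<delta> \<Longrightarrow> x \<le> (of_int b + 1) * \<delta>" using d by (simp add: algebra_simps)
  have eq: "N j \<omega> \<inter> {of_int a * \<delta> <.. of_int (b+1) * \<delta>} =
        (N j \<omega> \<inter> {of_int a * \<delta> <.. of_int b * \<delta>}) \<union> (N j \<omega> \<inter> cell \<delta> b)"
    unfolding cell_def using tr tr2 by auto
  have "card (N j \<omega> \<inter> {of_int a * \<delta> <.. of_int (b+1) * \<delta>}) =
        card (N j \<omega> \<inter> {of_int a * \<delta> <.. of_int b * \<delta>}) + cnt \<delta> j b \<omega>"
    unfolding eq cnt_def
    by (rule card_Un_disjoint) (auto intro!: locfin bounded_Ioc bounded_cell simp: cell_def)
  moreover have "{a..<b+1} = insert b {a..<b}" using step.hyps by auto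
  ultimately show ?case using step.IH by simp
qed

lemma idx_in:
  assumes d: "0 < \<delta>" and s: "s \<in> N j \<omega>" "s \<in> cell \<delta> l"
  shows "point_index (N j \<omega>) s \<in> Ix \<delta> j l \<omega>"
proof (cases "0 \<le> l")
  case True
  have sl: "of_int l * \<delta> < s" "s \<le> (of_int l + 1) * \<delta>" using s unfolding cell_def by auto
  have "0 \<le> of_int l * \<delta>" using True d by simp
  then have s0: "0 < s" using sl by linarith
  have c1: "card (N j \<omega> \<inter> {0 <.. of_int l * \<delta>}) = (\<Sum>l'\<in>{0..<l}. cnt \<delta> j l' \<omega>)"
    using card_N_ivl[OF d True, of j \<omega>] by simp
  have c2: "card (N j \<omega> \<inter> {0 <.. of_int (l+1) * \<delta>}) = (\<Sum>l'\<in>{0..<l+1}. cnt \<delta> j l' \<omega>)"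
    using card_N_ivl[OF d, of 0 "l+1" j \<omega>] True by simp
  have "{0..<l+1} = insert l {0..<l}" using True by auto
  then have c2': "card (N j \<omega> \<inter> {0 <.. of_int (l+1) * \<delta>}) = (\<Sum>l'\<in>{0..<l}. cnt \<delta> j l' \<omega>) + cnt \<delta> j l \<omega>"
    using c2 by simp
  have f1: "finite (N j \<omega> \<inter> {0<..s})" by (rule locfin[OF bounded_Ioc])
  have f2: "finite (N j \<omega> \<inter> {0 <.. of_int l * \<delta>})" by (rule locfin[OF bounded_Ioc])
  have f3: "finite (N j \<omega> \<inter> {0 <.. of_int (l+1) * \<delta>})" by (rule locfin[OF bounded_Ioc])
  have sub1: "insert s (N j \<omega> \<inter> {0 <.. of_int l * \<delta>}) \<subseteq> N j \<omega> \<inter> {0<..s}"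
    using s(1) s0 sl(1) by auto
  have ns: "s \<notin> {0 <.. of_int l * \<delta>}" using sl by auto
  have "card (insert s (N j \<omega> \<inter> {0 <.. of_int l * \<delta>})) \<le> card (N j \<omega> \<inter> {0<..s})"
    by (rule card_mono[OF f1 sub1])
  then have lo: "card (N j \<omega> \<inter> {0 <.. of_int l * \<delta>}) + 1 \<le> card (N j \<omega> \<inter> {0<..s})"
    using f2 ns by simp
  have sub2: "N j \<omega> \<inter> {0<..s} \<subseteq> N j \<omega> \<inter> {0 <.. of_int (l+1) * \<delta>}" using sl(2) by auto
  have up: "card (N j \<omega> \<inter> {0<..s}) \<le> card (N j \<omega> \<inter> {0 <.. of_int (l+1) * \<delta>})"
    by (rule card_mono[OF f3 sub2])
  have pi: "point_index (N j \<omega>) s = int (card (N j \<omega> \<inter> {0<..s}))"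
    using s0 unfolding point_index_def by simp
  have ix: "Ix \<delta> j l \<omega> = {int (\<Sum>l'\<in>{0..<l}. cnt \<delta> j l' \<omega>) + 1 .. int (\<Sum>l'\<in>{0..<l}. cnt \<delta> j l' \<omega>) + int (cnt \<delta> j l \<omega>)}"
    using True unfolding Ix_def Ixf_def by simp
  show ?thesis unfolding pi ix using lo up c1 c2' by (simp del: of_nat_sum)
next
  case False
  have sl: "of_int l * \<delta> < s" "s \<le> (of_int l + 1) * \<delta>" using s unfolding cell_def by auto
  have "(of_int l + 1) * \<delta> \<le> 0" using False d by (simp add: mult_nonpos_nonneg)
  then have s0: "s \<le> 0" using sl by simp
  have c1: "card (N j \<omega> \<inter> {of_int l * \<delta> <.. 0}) = (\<Sum>l'\<in>{l..<0}. cnt \<delta> j l' \<omega>)"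
    using card_N_ivl[OF d, of l 0 j \<omega>] False by simp
  have c2: "card (N j \<omega> \<inter> {of_int (l+1) * \<delta> <.. 0}) = (\<Sum>l'\<in>{l+1..<0}. cnt \<delta> j l' \<omega>)"
    using card_N_ivl[OF d, of "l+1" 0 j \<omega>] False by simp
  have bnd: "bounded {s..0}" by simp
  have f1: "finite (N j \<omega> \<inter> {s..0})" by (rule locfin[OF bnd])
  have f2: "finite (N j \<omega> \<inter> {of_int l * \<delta> <.. 0})" by (rule locfin[OF bounded_Ioc])
  have f3: "finite (N j \<omega> \<inter> {of_int (l+1) * \<delta> <.. 0})" by (rule locfin[OF bounded_Ioc])
  have sub1: "N j \<omega> \<inter> {s..0} \<subseteq> N j \<omega> \<inter> {of_int l * \<delta> <.. 0}" using sl(1) by auto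
  have up: "card (N j \<omega> \<inter> {s..0}) \<le> card (N j \<omega> \<inter> {of_int l * \<delta> <.. 0})"
    by (rule card_mono[OF f2 sub1])
  have sub2: "insert s (N j \<omega> \<inter> {of_int (l+1) * \<delta> <.. 0}) \<subseteq> N j \<omega> \<inter> {s..0}"
    using s(1) s0 sl(2) by auto
  have ns: "s \<notin> {of_int (l+1) * \<delta> <.. 0}" using sl by auto
  have "card (insert s (N j \<omega> \<inter> {of_int (l+1) * \<delta> <.. 0})) \<le> card (N j \<omega> \<inter> {s..0})"
    by (rule card_mono[OF f1 sub2])
  then have lo: "card (N j \<omega> \<inter> {of_int (l+1) * \<delta> <.. 0}) + 1 \<le> card (N j \<omega> \<inter> {s..0})"
    using f3 ns by simp
  have pi: "point_index (N j \<omega>) s = 1 - int (card (N j \<omega> \<inter> {s..0}))"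
    using s0 unfolding point_index_def by simp
  have ix: "Ix \<delta> j l \<omega> = {1 - int (\<Sum>l'\<in>{l..<0}. cnt \<delta> j l' \<omega>) .. - int (\<Sum>l'\<in>{l+1..<0}. cnt \<delta> j l' \<omega>)}"
    using False unfolding Ix_def Ixf_def by simp
  show ?thesis unfolding pi ix using lo up c1 c2 by (simp del: of_nat_sum)
qed

end

lemma measurable_count_sum:
  fixes f :: "'i \<Rightarrow> 'a \<Rightarrow> ennreal"
  assumes I: "countable I" and f: "\<And>i. i \<in> I \<Longrightarrow> f i \<in> borel_measurable M"
  shows "(\<lambda>x. \<integral>\<^sup>+i. f i x \<partial>count_space I) \<in> borel_measurable M"
proof cases
  assume "finite I" then show ?thesis
    using f by (simp add: nn_integral_count_space_finite)
next
  assume inf: "infinite I"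
  note * = bij_betw_from_nat_into[OF I inf]
  have eq: "\<And>x. (\<integral>\<^sup>+i. f i x \<partial>count_space I) = (\<Sum>n. f (from_nat_into I n) x)"
    by (simp add: nn_integral_bij_count_space[symmetric, OF *] nn_integral_count_space_nat)
  have ne: "I \<noteq> {}" using inf by auto
  have "\<And>n. f (from_nat_into I n) \<in> borel_measurable M"
    using f from_nat_into[OF ne] by blast
  then have "(\<lambda>x. \<Sum>n. f (from_nat_into I n) x) \<in> borel_measurable M"
    by measurable
  then show ?thesis unfolding eq .
qed

lemma count_space_ge: "x \<in> A \<Longrightarrow> f x \<le> (\<integral>\<^sup>+y. f y \<partial>count_space A)"
proof -
  assume x: "x \<in> A"
  have "(\<integral>\<^sup>+y. f y * indicator {x} y \<partial>count_space A) = (\<Sum>y\<in>{x}. f y * indicator {x} y)"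
    by (rule nn_integral_count_space') (use x in auto)
  also have "\<dots> = f x" by simp
  finally have "f x = (\<integral>\<^sup>+y. f y * indicator {x} y \<partial>count_space A)" by simp
  also have "\<dots> \<le> (\<integral>\<^sup>+y. f y \<partial>count_space A)"
    by (intro nn_integral_mono) (auto split: split_indicator)
  finally show ?thesis .
qed

lemma measurable_restrict_countable:
  fixes h :: "'a \<Rightarrow> 'w \<Rightarrow> 'c::countable"
  assumes F: "finite F" and h: "\<And>a. a \<in> F \<Longrightarrow> h a \<in> M \<rightarrow>\<^sub>M count_space UNIV"
    and G: "\<And>y. G y \<in> space N"
  shows "(\<lambda>\<omega>. G (restrict (\<lambda>a. h a \<omega>) F)) \<in> M \<rightarrow>\<^sub>M N"
proof -
  have "(\<lambda>\<omega>. restrict (\<lambda>a. h a \<omega>) F) \<in> M \<rightarrow>\<^sub>M PiM F (\<lambda>_. count_space UNIV)"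
    using h by (rule measurable_restrict)
  moreover have "PiM F (\<lambda>_. count_space (UNIV::'c set)) = count_space (PiE F (\<lambda>_. UNIV))"
    using F by (rule count_space_PiM_finite) auto
  ultimately have m: "(\<lambda>\<omega>. restrict (\<lambda>a. h a \<omega>) F) \<in> M \<rightarrow>\<^sub>M count_space (PiE F (\<lambda>_. UNIV))"
    by simp
  have "G \<in> count_space (PiE F (\<lambda>_. UNIV)) \<rightarrow>\<^sub>M N" using G by auto
  from measurable_comp[OF m this] show ?thesis by (simp add: comp_def)
qed

lemma poisson_mean_sums: "(\<lambda>k. real k * r ^ k / fact k) sums (r * exp r)"
proof -
  have e: "(\<lambda>n. r ^ n / fact n) sums exp r"
    using exp_converges[of r] by (simp add: divide_inverse scaleR_conv_of_real mult.commute)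
  have "(\<lambda>n. r * (r ^ n / fact n)) sums (r * exp r)" by (rule sums_mult[OF e])
  moreover have "\<And>n. r * (r ^ n / fact n) = real (Suc n) * r ^ Suc n / fact (Suc n)"
  proof -
    fix n
    have "fact (Suc n) = real (Suc n) * (fact n :: real)" by (simp only: fact_Suc of_nat_mult)
    moreover have "fact n \<noteq> (0::real)" by simp
    ultimately show "r * (r ^ n / fact n) = real (Suc n) * r ^ Suc n / fact (Suc n)"
      by (simp del: of_nat_Suc)
  qed
  ultimately have "(\<lambda>n. real (Suc n) * r ^ Suc n / fact (Suc n)) sums (r * exp r)" by simp
  from sums_Suc[OF this] show ?thesis by simp
qed

context bw begin

lemma cnt_meas: "cnt \<delta> j l \<in> M \<rightarrow>\<^sub>M count_space UNIV"
  unfolding cnt_def[abs_def] by (rule card_meas[OF borel_cell bounded_cell])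

lemma Ix_restrict: "Ix \<delta> j l \<omega> = Ixf (restrict (\<lambda>l'. cnt \<delta> j l' \<omega>) {min l 0..max l 0}) l"
  unfolding Ix_def by (rule Ixf_cong) simp

lemma Ix_pred_meas: "(\<lambda>\<omega>. \<iota> \<in> Ix \<delta> j l \<omega>) \<in> M \<rightarrow>\<^sub>M count_space UNIV"
  unfolding Ix_restrict
  by (rule measurable_restrict_countable[where G="\<lambda>y. \<iota> \<in> Ixf y l"]) (auto intro: cnt_meas)

lemma Ix_sets: "{\<omega> \<in> space M. \<iota> \<in> Ix \<delta> j l \<omega>} \<in> sets M"
  using Ix_pred_meas[of \<iota> \<delta> j l] by (simp add: pred_def)

definition X :: "real \<Rightarrow> 'i \<Rightarrow> int \<Rightarrow> ('i \<times> real) set set \<Rightarrow> 'w \<Rightarrow> ennreal" where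
  "X \<delta> j l P \<omega> = (\<integral>\<^sup>+\<iota>. indicator {\<omega>. \<iota> \<in> Ix \<delta> j l \<omega> \<and> Mk j \<iota> \<omega> \<in> P} \<omega> \<partial>count_space UNIV)"

lemma X_term_sets: "{\<omega> \<in> space M. \<iota> \<in> Ix \<delta> j l \<omega> \<and> Mk j \<iota> \<omega> \<in> P} \<in> sets M"
proof -
  have "{\<omega> \<in> space M. Mk j \<iota> \<omega> \<in> P} \<in> sets M"
    using measurable_sets[OF Mk_meas, of P j \<iota>] by (simp add: vimage_def Int_def conj_commute)
  moreover have "{\<omega> \<in> space M. \<iota> \<in> Ix \<delta> j l \<omega> \<and> Mk j \<iota> \<omega> \<in> P} =
     {\<omega> \<in> space M. \<iota> \<in> Ix \<delta> j l \<omega>} \<inter> {\<omega> \<in> space M. Mk j \<iota> \<omega> \<in> P}" by auto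
  ultimately show ?thesis using Ix_sets by auto
qed

lemma X_meas: "X \<delta> j l P \<in> borel_measurable M"
  unfolding X_def[abs_def]
  by (rule measurable_count_sum) (auto intro!: borel_measurable_indicator' X_term_sets)

lemma X_ge1: "0 < \<delta> \<Longrightarrow> s \<in> N j \<omega> \<Longrightarrow> s \<in> cell \<delta> l \<Longrightarrow> Mk j (point_index (N j \<omega>) s) \<omega> \<in> P
   \<Longrightarrow> 1 \<le> X \<delta> j l P \<omega>"
  unfolding X_def
  by (rule order_trans[OF _ count_space_ge[of "point_index (N j \<omega>) s"]]) (auto simp: idx_in)

lemma E_cnt: assumes d: "0 < \<delta>"
  shows "(\<integral>\<^sup>+\<omega>. of_nat (cnt \<delta> j l \<omega>) \<partial>M) = ennreal (\<Gamma> j * \<delta>)"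
proof -
  define r where "r = \<Gamma> j * \<delta>"
  have r0: "0 \<le> r" using Gpos[of j] d by (simp add: r_def)
  have mc: "measure lborel (cell \<delta> l) = \<delta>"
    using d unfolding cell_def by (simp add: algebra_simps)
  define S where "S k = {\<omega> \<in> space M. cnt \<delta> j l \<omega> = k}" for k
  have S_sets: "S k \<in> sets M" for k
    using measurable_sets[OF cnt_meas, of "{k}" \<delta> j l] by (simp add: S_def vimage_def Int_def conj_commute)
  have law: "measure M (S k) = r ^ k / fact k * exp (- r)" for k
    unfolding S_def cnt_def r_def using card_law[OF borel_cell bounded_cell] mc by simp
  have pw: "(of_nat (cnt \<delta> j l \<omega>)::ennreal) = (\<Sum>k. of_nat k * indicator (S k) \<omega>)" if "\<omega> \<in> space M" for \<omega>
  proof -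
    have "(\<lambda>k. of_nat k * indicator (S k) \<omega> :: ennreal) = (\<lambda>k. if k = cnt \<delta> j l \<omega> then of_nat k else 0)"
      using that by (auto simp: S_def fun_eq_iff split: split_indicator)
    then have "(\<Sum>k. of_nat k * indicator (S k) \<omega> :: ennreal) = (\<Sum>k. if k = cnt \<delta> j l \<omega> then of_nat k else 0)"
      by simp
    also have "\<dots> = of_nat (cnt \<delta> j l \<omega>)"
      by (rule sums_unique[symmetric, OF sums_single])
    finally show ?thesis by simp
  qed
  have "(\<integral>\<^sup>+\<omega>. of_nat (cnt \<delta> j l \<omega>) \<partial>M) = (\<integral>\<^sup>+\<omega>. (\<Sum>k. of_nat k * indicator (S k) \<omega>) \<partial>M)"
    by (rule nn_integral_cong) (simp add: pw)
  also have "\<dots> = (\<Sum>k. \<integral>\<^sup>+\<omega>. of_nat k * indicator (S k) \<omega> \<partial>M)"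
    by (intro nn_integral_suminf) (use S_sets[measurable] in measurable)
  also have "\<dots> = (\<Sum>k. ennreal (real k) * ennreal (r ^ k * exp (- r) / fact k))"
    using S_sets by (simp add: nn_integral_cmult_indicator emeasure_eq_measure law ennreal_of_nat_eq_real_of_nat)
  also have "\<dots> = (\<Sum>k. ennreal (real k * r ^ k / fact k * exp (- r)))"
    by (intro suminf_cong) (simp add: ennreal_mult[symmetric] r0 field_simps)
  also have "\<dots> = ennreal (\<Sum>k. real k * r ^ k / fact k * exp (- r))"
    using r0 by (intro suminf_ennreal2 sums_summable[OF sums_mult2[OF poisson_mean_sums]]) auto
  also have "(\<Sum>k. real k * r ^ k / fact k * exp (- r)) = r * exp r * exp (-r)"
    using sums_mult2[OF poisson_mean_sums[of r], of "exp (-r)"] by (simp add: sums_iff)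
  also have "\<dots> = r" by (simp add: exp_minus field_simps)
  finally show ?thesis by (simp add: r_def)
qed

lemma good_AE: "AE \<omega> in M. \<forall>j k. Mk j k \<omega> \<in> set_pmf (lam j)"
proof -
  have "AE \<omega> in M. Mk j k \<omega> \<in> set_pmf (lam j)" for j k
  proof -
    define A where "A = {\<omega> \<in> space M. Mk j k \<omega> \<in> set_pmf (lam j)}"
    have As: "A \<in> sets M"
      using measurable_sets[OF Mk_meas, of "set_pmf (lam j)" j k] by (simp add: A_def vimage_def Int_def conj_commute)
    have Bs: "\<And>v. {\<omega> \<in> space M. Mk j k \<omega> = v} \<in> sets M"
      using measurable_sets[OF Mk_meas, of "{_}" j k] by (simp add: vimage_def Int_def conj_commute)
    have "A = (\<Union>v\<in>set_pmf (lam j). {\<omega> \<in> space M. Mk j k \<omega> = v})" by (auto simp: A_def)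
    then have "emeasure M A = (\<integral>\<^sup>+v. emeasure M {\<omega> \<in> space M. Mk j k \<omega> = v} \<partial>count_space (set_pmf (lam j)))"
      by (simp only:) (rule emeasure_UN_countable, auto simp: Bs disjoint_family_on_def)
    also have "\<dots> = (\<integral>\<^sup>+v. ennreal (pmf (lam j) v) \<partial>count_space (set_pmf (lam j)))"
      by (simp add: emeasure_eq_measure Mk_law)
    also have "\<dots> = 1" by (simp add: nn_integral_pmf emeasure_pmf)
    finally have "emeasure M A = 1" .
    then have "prob A = 1" by (simp add: emeasure_eq_measure)
    then have "AE \<omega> in M. \<omega> \<in> A" using As by (simp add: prob_space.AE_in_set_eq_1 prob_space_axioms)
    then show ?thesis by (auto simp: A_def)
  qed
  then show ?thesis by (simp add: AE_all_countable)
qed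

end

lemma prod_list_nth: "prod_list (map f xs) = (\<Prod>k<length xs. f (xs ! k))"
proof (induction xs)
  case Nil then show ?case by simp
next
  case (Cons x xs)
  then show ?case by (simp add: prod.lessThan_Suc_shift del: prod.lessThan_Suc)
qed

lemma prod_count_space:
  fixes f :: "'k \<Rightarrow> 'c::countable \<Rightarrow> ennreal"
  assumes I: "finite I"
  shows "(\<Prod>k\<in>I. \<integral>\<^sup>+\<iota>. f k \<iota> \<partial>count_space UNIV) =
         (\<integral>\<^sup>+h. (\<Prod>k\<in>I. f k (h k)) \<partial>count_space (PiE I (\<lambda>_. UNIV)))"
proof -
  interpret product_sigma_finite "\<lambda>_::'k. count_space (UNIV::'c set)"
    by (intro product_sigma_finite.intro sigma_finite_measure_count_space_countable) auto
  have "(\<integral>\<^sup>+h. (\<Prod>k\<in>I. f k (h k)) \<partial>PiM I (\<lambda>_. count_space UNIV)) =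
        (\<Prod>k\<in>I. \<integral>\<^sup>+\<iota>. f k \<iota> \<partial>count_space UNIV)"
    by (rule product_nn_integral_prod) (use I in auto)
  moreover have "PiM I (\<lambda>_. count_space (UNIV::'c set)) = count_space (PiE I (\<lambda>_. UNIV))"
    using I by (rule count_space_PiM_finite) auto
  ultimately show ?thesis by simp
qed

context prob_space begin

lemma indep_var_nn_integral_mult:
  fixes X1 X2 :: "'a \<Rightarrow> ennreal"
  assumes iv: "indep_var borel X1 borel X2"
  shows "(\<integral>\<^sup>+\<omega>. X1 \<omega> * X2 \<omega> \<partial>M) = (\<integral>\<^sup>+\<omega>. X1 \<omega> \<partial>M) * (\<integral>\<^sup>+\<omega>. X2 \<omega> \<partial>M)"
proof -
  have cb: "case_bool borel borel = (\<lambda>_::bool. borel)" by (auto simp: fun_eq_iff split: bool.split)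
  have iv2: "indep_vars (\<lambda>_. borel) (case_bool X1 X2) UNIV"
    using iv unfolding indep_var_def cb .
  have "(\<integral>\<^sup>+\<omega>. (\<Prod>b\<in>UNIV. case_bool X1 X2 b \<omega>) \<partial>M) = (\<Prod>b\<in>UNIV. \<integral>\<^sup>+\<omega>. case_bool X1 X2 b \<omega> \<partial>M)"
    by (rule indep_vars_nn_integral) (use iv2 in auto)
  then show ?thesis by (simp add: UNIV_bool mult.commute)
qed

end

context bw begin

definition Afam :: "real \<Rightarrow> ('i \<times> real set) set" where
  "Afam \<delta> = (\<lambda>(j, l). (j, cell \<delta> l)) ` UNIV"

lemma cell_inj: assumes d: "0 < \<delta>" and eq: "cell \<delta> l = cell \<delta> l'" shows "l = l'"
proof (rule ccontr)
  assume "l \<noteq> l'"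
  then have "cell \<delta> l \<inter> cell \<delta> l' = {}" using cell_disj[OF d] by blast
  moreover have "(of_int l + 1) * \<delta> \<in> cell \<delta> l" using d unfolding cell_def by (auto simp: algebra_simps)
  ultimately show False using eq by auto
qed

lemma IV: assumes d: "0 < \<delta>"
  shows "indep_vars (\<lambda>_. count_space UNIV) Xv (Inl ` Afam \<delta> \<union> range Inr)"
proof (rule indep)
  show "Afam \<delta> \<subseteq> {(j, A). A \<in> sets borel \<and> bounded A}"
    unfolding Afam_def by (auto simp: borel_cell bounded_cell)
next
  fix j A B assume "(j, A) \<in> Afam \<delta>" "(j, B) \<in> Afam \<delta>" "A \<noteq> B"
  then obtain l l' where "A = cell \<delta> l" "B = cell \<delta> l'" "l \<noteq> l'" unfolding Afam_def by auto
  then show "A \<inter> B = {}" using cell_disj[OF d] by auto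
qed

definition projl :: "nat + ('i \<times> real) set \<Rightarrow> nat" where
  "projl y = (case y of Inl n \<Rightarrow> n | Inr _ \<Rightarrow> 0)"

definition projr :: "nat + ('i \<times> real) set \<Rightarrow> ('i \<times> real) set" where
  "projr y = (case y of Inl _ \<Rightarrow> {} | Inr s \<Rightarrow> s)"

lemma Xv_Inl: "Xv (Inl (j, cell \<delta> l)) \<omega> = Inl (cnt \<delta> j l \<omega>)"
  by (simp add: Xv_def cnt_def)

lemma Xv_Inr: "Xv (Inr (j, k)) \<omega> = Inr (Mk j k \<omega>)"
  by (simp add: Xv_def)

lemma IL1: assumes d: "0 < \<delta>" and F: "finite F"
  shows "(\<integral>\<^sup>+\<omega>. (\<Prod>a\<in>F. of_nat (cnt \<delta> (fst a) (snd a) \<omega>)) \<partial>M) = (\<Prod>a\<in>F. ennreal (\<Gamma> (fst a) * \<delta>))"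
proof -
  define e :: "'i \<times> int \<Rightarrow> ('i \<times> real set) + ('i \<times> int)" where "e a = Inl (fst a, cell \<delta> (snd a))" for a
  have inj: "inj_on e F" using cell_inj[OF d] by (auto simp: e_def inj_on_def)
  have sub: "e ` F \<subseteq> Inl ` Afam \<delta> \<union> range Inr" by (force simp: e_def Afam_def)
  have iv: "indep_vars (\<lambda>_. count_space UNIV) Xv (e ` F)"
    by (rule indep_vars_subset[OF IV[OF d] sub])
  have iv2: "indep_vars (\<lambda>_. borel) (\<lambda>x \<omega>. (of_nat (projl (Xv x \<omega>)) :: ennreal)) (e ` F)"
    by (rule indep_vars_compose2[OF iv]) auto
  have "(\<integral>\<^sup>+\<omega>. (\<Prod>x\<in>e ` F. (of_nat (projl (Xv x \<omega>)) :: ennreal)) \<partial>M) = (\<Prod>x\<in>e ` F. \<integral>\<^sup>+\<omega>. of_nat (projl (Xv x \<omega>)) \<partial>M)"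
    by (rule indep_vars_nn_integral[OF _ iv2]) (use F in auto)
  also have "\<dots> = (\<Prod>a\<in>F. \<integral>\<^sup>+\<omega>. of_nat (cnt \<delta> (fst a) (snd a) \<omega>) \<partial>M)"
    by (subst prod.reindex[OF inj]) (simp add: e_def Xv_Inl projl_def case_prod_beta)
  also have "\<dots> = (\<Prod>a\<in>F. ennreal (\<Gamma> (fst a) * \<delta>))"
    by (intro prod.cong refl) (simp add: E_cnt[OF d])
  finally have eq1: "(\<integral>\<^sup>+\<omega>. (\<Prod>x\<in>e ` F. (of_nat (projl (Xv x \<omega>)) :: ennreal)) \<partial>M) = (\<Prod>a\<in>F. ennreal (\<Gamma> (fst a) * \<delta>))" .
  have "\<And>\<omega>. (\<Prod>x\<in>e ` F. (of_nat (projl (Xv x \<omega>)) :: ennreal)) = (\<Prod>a\<in>F. of_nat (cnt \<delta> (fst a) (snd a) \<omega>))"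
    by (subst prod.reindex[OF inj]) (simp add: e_def Xv_Inl projl_def case_prod_beta)
  then show ?thesis using eq1 by simp
qed

lemma E_Mk_in: assumes Q: "Q = UNIV \<or> (\<exists>v. Q = {v})"
  shows "(\<integral>\<^sup>+\<omega>. of_bool (Mk j k \<omega> \<in> Q) \<partial>M) = ennreal (measure_pmf.prob (lam j) Q)"
proof -
  have sets: "{\<omega> \<in> space M. Mk j k \<omega> \<in> Q} \<in> sets M"
    using measurable_sets[OF Mk_meas, of Q j k] by (simp add: vimage_def Int_def conj_commute)
  have "(\<integral>\<^sup>+\<omega>. of_bool (Mk j k \<omega> \<in> Q) \<partial>M) = (\<integral>\<^sup>+\<omega>. indicator {\<omega> \<in> space M. Mk j k \<omega> \<in> Q} \<omega> \<partial>M)"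
    by (rule nn_integral_cong) (simp add: indicator_def)
  also have "\<dots> = emeasure M {\<omega> \<in> space M. Mk j k \<omega> \<in> Q}"
    using sets by simp
  also have "\<dots> = ennreal (measure_pmf.prob (lam j) Q)"
  proof (cases "Q = UNIV")
    case True then show ?thesis by (simp add: emeasure_space_1)
  next
    case False
    then obtain v where v: "Q = {v}" using Q by auto
    show ?thesis using Mk_law[of j k v] by (simp add: v emeasure_eq_measure measure_pmf_single)
  qed
  finally show ?thesis .
qed

lemma IL3: assumes B: "finite B" and Q: "\<And>b. b \<in> B \<Longrightarrow> Q b = UNIV \<or> (\<exists>v. Q b = {v})"
  shows "(\<integral>\<^sup>+\<omega>. (\<Prod>b\<in>B. of_bool (Mk (fst b) (snd b) \<omega> \<in> Q b)) \<partial>M) =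
         (\<Prod>b\<in>B. ennreal (measure_pmf.prob (lam (fst b)) (Q b)))"
proof -
  define qq where "qq x = (case x of Inr b \<Rightarrow> Q b | Inl _ \<Rightarrow> UNIV)" for x :: "('i \<times> real set) + ('i \<times> int)"
  have sub: "Inr ` B \<subseteq> Inl ` Afam 1 \<union> range Inr" by auto
  have iv: "indep_vars (\<lambda>_. count_space UNIV) Xv (Inr ` B)"
    by (rule indep_vars_subset[OF IV sub]) simp
  have iv2: "indep_vars (\<lambda>_. borel) (\<lambda>x \<omega>. (of_bool (projr (Xv x \<omega>) \<in> qq x) :: ennreal)) (Inr ` B)"
    by (rule indep_vars_compose2[OF iv]) auto
  have "(\<integral>\<^sup>+\<omega>. (\<Prod>x\<in>Inr ` B. (of_bool (projr (Xv x \<omega>) \<in> qq x) :: ennreal)) \<partial>M) =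
        (\<Prod>x\<in>Inr ` B. \<integral>\<^sup>+\<omega>. of_bool (projr (Xv x \<omega>) \<in> qq x) \<partial>M)"
    by (rule indep_vars_nn_integral[OF _ iv2]) (use B in auto)
  moreover have "\<And>\<omega>. (\<Prod>x\<in>Inr ` B. (of_bool (projr (Xv x \<omega>) \<in> qq x) :: ennreal)) =
        (\<Prod>b\<in>B. of_bool (Mk (fst b) (snd b) \<omega> \<in> Q b))"
    by (subst prod.reindex) (auto simp: qq_def projr_def Xv_def case_prod_beta)
  moreover have "(\<Prod>x\<in>Inr ` B. \<integral>\<^sup>+\<omega>. (of_bool (projr (Xv x \<omega>) \<in> qq x) :: ennreal) \<partial>M) =
        (\<Prod>b\<in>B. ennreal (measure_pmf.prob (lam (fst b)) (Q b)))"
    by (subst prod.reindex) (auto simp: qq_def projr_def Xv_def case_prod_beta E_Mk_in Q intro!: prod.cong)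
  ultimately show ?thesis by simp
qed

lemma IL2: assumes d: "0 < \<delta>" and F: "finite F" and B: "finite B"
    and Q: "\<And>b. b \<in> B \<Longrightarrow> Q b = UNIV \<or> (\<exists>v. Q b = {v})"
  shows "(\<integral>\<^sup>+\<omega>. of_bool (S (restrict (\<lambda>a. cnt \<delta> (fst a) (snd a) \<omega>) F)) *
             (\<Prod>b\<in>B. of_bool (Mk (fst b) (snd b) \<omega> \<in> Q b)) \<partial>M) =
         (\<integral>\<^sup>+\<omega>. of_bool (S (restrict (\<lambda>a. cnt \<delta> (fst a) (snd a) \<omega>) F)) \<partial>M) *
         (\<Prod>b\<in>B. ennreal (measure_pmf.prob (lam (fst b)) (Q b)))"
proof -
  define e :: "'i \<times> int \<Rightarrow> ('i \<times> real set) + ('i \<times> int)" where "e a = Inl (fst a, cell \<delta> (snd a))" for a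
  define A where "A = e ` F"
  define Bi :: "(('i \<times> real set) + ('i \<times> int)) set" where "Bi = Inr ` B"
  have AB: "A \<inter> Bi = {}" "A \<subseteq> Inl ` Afam \<delta> \<union> range Inr" "Bi \<subseteq> Inl ` Afam \<delta> \<union> range Inr"
    by (force simp: A_def Bi_def e_def Afam_def)+
  have iv: "indep_var (PiM A (\<lambda>_. count_space UNIV)) (\<lambda>\<omega>. restrict (\<lambda>i. Xv i \<omega>) A)
                      (PiM Bi (\<lambda>_. count_space UNIV)) (\<lambda>\<omega>. restrict (\<lambda>i. Xv i \<omega>) Bi)"
    by (rule indep_var_restrict[OF IV[OF d] AB])
  define f1 :: "(('i \<times> real set) + ('i \<times> int) \<Rightarrow> nat + ('i \<times> real) set) \<Rightarrow> ennreal" where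
    "f1 y = of_bool (S (restrict (\<lambda>a. projl (y (e a))) F))" for y
  define f2 :: "(('i \<times> real set) + ('i \<times> int) \<Rightarrow> nat + ('i \<times> real) set) \<Rightarrow> ennreal" where
    "f2 y = (\<Prod>b\<in>B. of_bool (projr (y (Inr b)) \<in> Q b))" for y
  have m1: "f1 \<in> PiM A (\<lambda>_. count_space UNIV) \<rightarrow>\<^sub>M borel"
    unfolding f1_def
  proof (rule measurable_restrict_countable[OF F])
    fix a assume "a \<in> F"
    then have "e a \<in> A" by (simp add: A_def)
    then have "(\<lambda>y. y (e a)) \<in> PiM A (\<lambda>_. count_space UNIV) \<rightarrow>\<^sub>M count_space UNIV"
      by (rule measurable_component_singleton)
    then show "(\<lambda>y. projl (y (e a))) \<in> PiM A (\<lambda>_. count_space UNIV) \<rightarrow>\<^sub>M count_space UNIV"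
      by (rule measurable_compose) simp
  qed simp
  have m2: "f2 \<in> PiM Bi (\<lambda>_. count_space UNIV) \<rightarrow>\<^sub>M borel"
    unfolding f2_def
  proof (rule borel_measurable_prod_ennreal)
    fix b assume "b \<in> B"
    then have "Inr b \<in> Bi" by (simp add: Bi_def)
    then have "(\<lambda>y. y (Inr b)) \<in> PiM Bi (\<lambda>_. count_space UNIV) \<rightarrow>\<^sub>M count_space UNIV"
      by (rule measurable_component_singleton)
    then show "(\<lambda>y. (of_bool (projr (y (Inr b)) \<in> Q b) :: ennreal)) \<in> borel_measurable (PiM Bi (\<lambda>_. count_space UNIV))"
      by (rule measurable_compose) simp
  qed
  have iv2: "indep_var borel (f1 \<circ> (\<lambda>\<omega>. restrict (\<lambda>i. Xv i \<omega>) A)) borel (f2 \<circ> (\<lambda>\<omega>. restrict (\<lambda>i. Xv i \<omega>) Bi))"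
    by (rule indep_var_compose[OF iv m1 m2])
  have p1: "(f1 \<circ> (\<lambda>\<omega>. restrict (\<lambda>i. Xv i \<omega>) A)) \<omega> = of_bool (S (restrict (\<lambda>a. cnt \<delta> (fst a) (snd a) \<omega>) F))" for \<omega>
  proof -
    have "restrict (\<lambda>a. projl (restrict (\<lambda>i. Xv i \<omega>) A (e a))) F = restrict (\<lambda>a. cnt \<delta> (fst a) (snd a) \<omega>) F"
    proof (rule ext)
      fix a show "restrict (\<lambda>a. projl (restrict (\<lambda>i. Xv i \<omega>) A (e a))) F a = restrict (\<lambda>a. cnt \<delta> (fst a) (snd a) \<omega>) F a"
      proof (cases "a \<in> F")
        case True then have "e a \<in> A" by (simp add: A_def)
        then show ?thesis using True by (simp add: e_def Xv_Inl projl_def)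
      qed simp
    qed
    then show ?thesis by (simp add: f1_def)
  qed
  have p2: "(f2 \<circ> (\<lambda>\<omega>. restrict (\<lambda>i. Xv i \<omega>) Bi)) \<omega> = (\<Prod>b\<in>B. of_bool (Mk (fst b) (snd b) \<omega> \<in> Q b))" for \<omega>
    by (auto simp: f2_def Bi_def Xv_def projr_def case_prod_beta intro!: prod.cong)
  have "(\<integral>\<^sup>+\<omega>. (f1 \<circ> (\<lambda>\<omega>. restrict (\<lambda>i. Xv i \<omega>) A)) \<omega> * (f2 \<circ> (\<lambda>\<omega>. restrict (\<lambda>i. Xv i \<omega>) Bi)) \<omega> \<partial>M) =
        (\<integral>\<^sup>+\<omega>. (f1 \<circ> (\<lambda>\<omega>. restrict (\<lambda>i. Xv i \<omega>) A)) \<omega> \<partial>M) * (\<integral>\<^sup>+\<omega>. (f2 \<circ> (\<lambda>\<omega>. restrict (\<lambda>i. Xv i \<omega>) Bi)) \<omega> \<partial>M)"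
    by (rule indep_var_nn_integral_mult[OF iv2])
  then show ?thesis unfolding p1 p2 using IL3[OF B Q] by simp
qed

end

lemma prod_of_bool_ennreal: "finite I \<Longrightarrow> (\<Prod>k\<in>I. (of_bool (p k) :: ennreal)) = of_bool (\<forall>k\<in>I. p k)"
  by (induction I rule: finite_induct) auto

context bw begin

lemma KL:
  assumes d: "0 < \<delta>" and dist: "distinct (map fst xs)"
    and Pq: "\<And>x. x \<in> set xs \<Longrightarrow> snd x = UNIV \<or> (\<exists>v. snd x = {v})"
  shows "(\<integral>\<^sup>+\<omega>. prod_list (map (\<lambda>x. X \<delta> (fst (fst x)) (snd (fst x)) (snd x) \<omega>) xs) \<partial>M)
     \<le> prod_list (map (\<lambda>x. ennreal (\<Gamma> (fst (fst x)) * \<delta>) * ennreal (measure_pmf.prob (lam (fst (fst x))) (snd x))) xs)"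
proof -
  define m where "m = length xs"
  define I where "I = {..<m}"
  define c where "c k = fst (xs ! k)" for k
  define P where "P k = snd (xs ! k)" for k
  define jj where "jj k = fst (c k)" for k
  define ll where "ll k = snd (c k)" for k
  define g :: "nat \<Rightarrow> int \<Rightarrow> 'w \<Rightarrow> ennreal" where
    "g k \<iota> \<omega> = of_bool (\<iota> \<in> Ix \<delta> (jj k) (ll k) \<omega> \<and> Mk (jj k) \<iota> \<omega> \<in> P k)" for k \<iota> \<omega>
  define H where "H = PiE I (\<lambda>_. UNIV :: int set)"
  define L where "L = (\<Prod>k\<in>I. ennreal (measure_pmf.prob (lam (jj k)) (P k)))"
  have finI: "finite I" by (simp add: I_def)
  have cH: "countable H" unfolding H_def by (rule countable_PiE) (auto simp: finI)
  have injc: "inj_on c I"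
    using dist unfolding inj_on_def I_def m_def c_def by (simp add: nth_eq_iff_index_eq[symmetric])
  have Pk: "\<And>k. k \<in> I \<Longrightarrow> P k = UNIV \<or> (\<exists>v. P k = {v})"
    using Pq by (auto simp: P_def I_def m_def)
  have g_meas: "(\<lambda>\<omega>. g k \<iota> \<omega>) \<in> borel_measurable M" for k \<iota>
  proof -
    have "(\<lambda>\<omega>. indicator {\<omega>. \<iota> \<in> Ix \<delta> (jj k) (ll k) \<omega> \<and> Mk (jj k) \<iota> \<omega> \<in> P k} \<omega> :: ennreal) \<in> borel_measurable M"
      by (rule borel_measurable_indicator') (simp add: X_term_sets)
    then show ?thesis by (simp add: g_def indicator_def)
  qed
  have Xg: "X \<delta> (jj k) (ll k) (P k) \<omega> = (\<integral>\<^sup>+\<iota>. g k \<iota> \<omega> \<partial>count_space UNIV)" for k \<omega>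
    unfolding X_def g_def by (simp add: indicator_def)
  have lhs: "prod_list (map (\<lambda>x. X \<delta> (fst (fst x)) (snd (fst x)) (snd x) \<omega>) xs) =
      (\<integral>\<^sup>+h. (\<Prod>k\<in>I. g k (h k) \<omega>) \<partial>count_space H)" for \<omega>
  proof -
    have "prod_list (map (\<lambda>x. X \<delta> (fst (fst x)) (snd (fst x)) (snd x) \<omega>) xs) = (\<Prod>k\<in>I. X \<delta> (jj k) (ll k) (P k) \<omega>)"
      by (simp add: prod_list_nth I_def m_def jj_def ll_def c_def P_def)
    also have "\<dots> = (\<Prod>k\<in>I. \<integral>\<^sup>+\<iota>. g k \<iota> \<omega> \<partial>count_space UNIV)" by (simp add: Xg)
    also have "\<dots> = (\<integral>\<^sup>+h. (\<Prod>k\<in>I. g k (h k) \<omega>) \<partial>count_space H)"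
      unfolding H_def by (rule prod_count_space[OF finI])
    finally show ?thesis .
  qed
  have rhs: "prod_list (map (\<lambda>x. ennreal (\<Gamma> (fst (fst x)) * \<delta>) * ennreal (measure_pmf.prob (lam (fst (fst x))) (snd x))) xs)
      = (\<Prod>k\<in>I. ennreal (\<Gamma> (jj k) * \<delta>)) * L"
    by (simp add: prod_list_nth I_def m_def jj_def ll_def c_def P_def L_def prod.distrib)
  have per_h: "(\<integral>\<^sup>+\<omega>. (\<Prod>k\<in>I. g k (h k) \<omega>) \<partial>M) \<le>
      (\<integral>\<^sup>+\<omega>. (\<Prod>k\<in>I. of_bool (h k \<in> Ix \<delta> (jj k) (ll k) \<omega>)) \<partial>M) * L" if hH: "h \<in> H" for h
  proof (cases "inj_on (\<lambda>k. (jj k, h k)) I")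
    case True
    define F where "F = (\<Union>k\<in>I. (\<lambda>l'. (jj k, l')) ` {min (ll k) 0..max (ll k) 0})"
    define S where "S y = (\<forall>k\<in>I. h k \<in> Ixf (\<lambda>l'. y (jj k, l')) (ll k))" for y :: "'i \<times> int \<Rightarrow> nat"
    define B where "B = (\<lambda>k. (jj k, h k)) ` I"
    define Q where "Q b = P (inv_into I (\<lambda>k. (jj k, h k)) b)" for b
    have finF: "finite F" by (simp add: F_def finI)
    have finB: "finite B" by (simp add: B_def finI)
    have QB: "\<And>b. b \<in> B \<Longrightarrow> Q b = UNIV \<or> (\<exists>v. Q b = {v})"
    proof -
      fix b assume "b \<in> B"
      then obtain k where "k \<in> I" "b = (jj k, h k)" by (auto simp: B_def)
      then show "Q b = UNIV \<or> (\<exists>v. Q b = {v})" using Pk[of k] by (simp add: Q_def inv_into_f_f[OF True])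
    qed
    have IxF: "Ix \<delta> (jj k) (ll k) \<omega> = Ixf (\<lambda>l'. restrict (\<lambda>a. cnt \<delta> (fst a) (snd a) \<omega>) F (jj k, l')) (ll k)"
      if "k \<in> I" for k \<omega>
      unfolding Ix_def by (rule Ixf_cong) (use that in \<open>auto simp: F_def\<close>)
    have Seq: "S (restrict (\<lambda>a. cnt \<delta> (fst a) (snd a) \<omega>) F) = (\<forall>k\<in>I. h k \<in> Ix \<delta> (jj k) (ll k) \<omega>)" for \<omega>
      unfolding S_def using IxF by auto
    have Beq: "(\<Prod>b\<in>B. (of_bool (Mk (fst b) (snd b) \<omega> \<in> Q b) :: ennreal)) = (\<Prod>k\<in>I. of_bool (Mk (jj k) (h k) \<omega> \<in> P k))" for \<omega>
      unfolding B_def by (subst prod.reindex[OF True]) (simp add: Q_def inv_into_f_f[OF True])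
    have BeqL: "(\<Prod>b\<in>B. ennreal (measure_pmf.prob (lam (fst b)) (Q b))) = L"
      unfolding B_def L_def by (subst prod.reindex[OF True]) (simp add: Q_def inv_into_f_f[OF True])
    have pw: "(\<Prod>k\<in>I. g k (h k) \<omega>) = of_bool (S (restrict (\<lambda>a. cnt \<delta> (fst a) (snd a) \<omega>) F)) *
         (\<Prod>b\<in>B. of_bool (Mk (fst b) (snd b) \<omega> \<in> Q b))" for \<omega>
    proof -
      have "(\<Prod>k\<in>I. g k (h k) \<omega>) = (\<Prod>k\<in>I. (of_bool (h k \<in> Ix \<delta> (jj k) (ll k) \<omega>) :: ennreal) * of_bool (Mk (jj k) (h k) \<omega> \<in> P k))"
        by (intro prod.cong refl) (simp add: g_def)
      also have "\<dots> = (\<Prod>k\<in>I. (of_bool (h k \<in> Ix \<delta> (jj k) (ll k) \<omega>) :: ennreal)) * (\<Prod>k\<in>I. of_bool (Mk (jj k) (h k) \<omega> \<in> P k))"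
        by (rule prod.distrib)
      finally show ?thesis by (simp add: Beq Seq prod_of_bool_ennreal finI)
    qed
    have "(\<integral>\<^sup>+\<omega>. (\<Prod>k\<in>I. g k (h k) \<omega>) \<partial>M) = (\<integral>\<^sup>+\<omega>. of_bool (S (restrict (\<lambda>a. cnt \<delta> (fst a) (snd a) \<omega>) F)) *
         (\<Prod>b\<in>B. of_bool (Mk (fst b) (snd b) \<omega> \<in> Q b)) \<partial>M)"
      by (simp add: pw)
    also have "\<dots> = (\<integral>\<^sup>+\<omega>. of_bool (S (restrict (\<lambda>a. cnt \<delta> (fst a) (snd a) \<omega>) F)) \<partial>M) *
         (\<Prod>b\<in>B. ennreal (measure_pmf.prob (lam (fst b)) (Q b)))"
      by (rule IL2[OF d finF finB QB])
    also have "\<dots> = (\<integral>\<^sup>+\<omega>. (\<Prod>k\<in>I. of_bool (h k \<in> Ix \<delta> (jj k) (ll k) \<omega>)) \<partial>M) * L"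
      by (simp add: BeqL Seq prod_of_bool_ennreal finI)
    finally show ?thesis by simp
  next
    case False
    then obtain k1 k2 where k: "k1 \<in> I" "k2 \<in> I" "k1 \<noteq> k2" "jj k1 = jj k2" "h k1 = h k2"
      unfolding inj_on_def by auto
    have "c k1 \<noteq> c k2" using injc k unfolding inj_on_def by auto
    then have "ll k1 \<noteq> ll k2" using k by (auto simp: jj_def ll_def prod_eq_iff)
    then have disj: "Ix \<delta> (jj k1) (ll k1) \<omega> \<inter> Ix \<delta> (jj k2) (ll k2) \<omega> = {}" for \<omega>
      unfolding Ix_def k(4) by (rule Ixf_disj)
    have z: "(\<Prod>k\<in>I. g k (h k) \<omega>) = 0" for \<omega>
    proof (cases "h k1 \<in> Ix \<delta> (jj k1) (ll k1) \<omega>")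
      case True
      then have "g k2 (h k2) \<omega> = 0" using disj[of \<omega>] k by (auto simp: g_def)
      then show ?thesis using k(2) finI by (intro prod_zero) blast+
    next
      case False
      then have "g k1 (h k1) \<omega> = 0" by (auto simp: g_def)
      then show ?thesis using k(1) finI by (intro prod_zero) blast+
    qed
    have "(\<integral>\<^sup>+\<omega>. (\<Prod>k\<in>I. g k (h k) \<omega>) \<partial>M) = (\<integral>\<^sup>+\<omega>. 0 \<partial>M)"
      by (rule nn_integral_cong) (rule z)
    then show ?thesis by simp
  qed
  have cnt_eq: "(\<integral>\<^sup>+\<iota>. (of_bool (\<iota> \<in> Ix \<delta> (jj k) (ll k) \<omega>) :: ennreal) \<partial>count_space UNIV) = of_nat (cnt \<delta> (jj k) (ll k) \<omega>)" for k \<omega>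
  proof -
    have "(\<integral>\<^sup>+\<iota>. (of_bool (\<iota> \<in> Ix \<delta> (jj k) (ll k) \<omega>) :: ennreal) \<partial>count_space UNIV) =
          (\<integral>\<^sup>+\<iota>. indicator (Ix \<delta> (jj k) (ll k) \<omega>) \<iota> \<partial>count_space UNIV)"
      by (simp add: indicator_def)
    also have "\<dots> = emeasure (count_space UNIV) (Ix \<delta> (jj k) (ll k) \<omega>)" by simp
    also have "\<dots> = of_nat (card (Ix \<delta> (jj k) (ll k) \<omega>))"
      by (simp add: Ix_def finite_Ixf)
    finally show ?thesis by (simp add: Ix_def card_Ixf)
  qed
  have ofb_meas: "(\<lambda>\<omega>. (\<Prod>k\<in>I. (of_bool (h k \<in> Ix \<delta> (jj k) (ll k) \<omega>) :: ennreal))) \<in> borel_measurable M" for h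
  proof (rule borel_measurable_prod_ennreal)
    fix k
    have "(\<lambda>\<omega>. indicator {\<omega>. h k \<in> Ix \<delta> (jj k) (ll k) \<omega>} \<omega> :: ennreal) \<in> borel_measurable M"
      by (rule borel_measurable_indicator') (simp add: Ix_sets)
    then show "(\<lambda>\<omega>. (of_bool (h k \<in> Ix \<delta> (jj k) (ll k) \<omega>) :: ennreal)) \<in> borel_measurable M"
      by (simp add: indicator_def)
  qed
  have "(\<integral>\<^sup>+\<omega>. prod_list (map (\<lambda>x. X \<delta> (fst (fst x)) (snd (fst x)) (snd x) \<omega>) xs) \<partial>M)
      = (\<integral>\<^sup>+\<omega>. (\<integral>\<^sup>+h. (\<Prod>k\<in>I. g k (h k) \<omega>) \<partial>count_space H) \<partial>M)"
    by (simp add: lhs)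
  also have "\<dots> = (\<integral>\<^sup>+h. (\<integral>\<^sup>+\<omega>. (\<Prod>k\<in>I. g k (h k) \<omega>) \<partial>M) \<partial>count_space H)"
    by (rule nn_integral_count_space_nn_integral[OF cH]) (auto intro!: borel_measurable_prod_ennreal g_meas)
  also have "\<dots> \<le> (\<integral>\<^sup>+h. (\<integral>\<^sup>+\<omega>. (\<Prod>k\<in>I. of_bool (h k \<in> Ix \<delta> (jj k) (ll k) \<omega>)) \<partial>M) * L \<partial>count_space H)"
    by (rule nn_integral_mono) (simp add: per_h)
  also have "\<dots> = (\<integral>\<^sup>+h. (\<integral>\<^sup>+\<omega>. (\<Prod>k\<in>I. of_bool (h k \<in> Ix \<delta> (jj k) (ll k) \<omega>)) \<partial>M) \<partial>count_space H) * L"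
    by (rule nn_integral_multc) simp
  also have "(\<integral>\<^sup>+h. (\<integral>\<^sup>+\<omega>. (\<Prod>k\<in>I. of_bool (h k \<in> Ix \<delta> (jj k) (ll k) \<omega>)) \<partial>M) \<partial>count_space H)
      = (\<integral>\<^sup>+\<omega>. (\<integral>\<^sup>+h. (\<Prod>k\<in>I. of_bool (h k \<in> Ix \<delta> (jj k) (ll k) \<omega>)) \<partial>count_space H) \<partial>M)"
    by (rule nn_integral_count_space_nn_integral[OF cH, symmetric]) (rule ofb_meas)
  also have "\<dots> = (\<integral>\<^sup>+\<omega>. (\<Prod>k\<in>I. of_nat (cnt \<delta> (jj k) (ll k) \<omega>)) \<partial>M)"
  proof (rule nn_integral_cong)
    fix \<omega>
    have "(\<integral>\<^sup>+h. (\<Prod>k\<in>I. (of_bool (h k \<in> Ix \<delta> (jj k) (ll k) \<omega>) :: ennreal)) \<partial>count_space H) =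
          (\<Prod>k\<in>I. \<integral>\<^sup>+\<iota>. (of_bool (\<iota> \<in> Ix \<delta> (jj k) (ll k) \<omega>) :: ennreal) \<partial>count_space UNIV)"
      unfolding H_def by (rule prod_count_space[OF finI, symmetric])
    then show "(\<integral>\<^sup>+h. (\<Prod>k\<in>I. (of_bool (h k \<in> Ix \<delta> (jj k) (ll k) \<omega>) :: ennreal)) \<partial>count_space H) =
          (\<Prod>k\<in>I. of_nat (cnt \<delta> (jj k) (ll k) \<omega>))"
      by (simp add: cnt_eq)
  qed
  also have "\<dots> = (\<integral>\<^sup>+\<omega>. (\<Prod>a\<in>c ` I. of_nat (cnt \<delta> (fst a) (snd a) \<omega>)) \<partial>M)"
    by (simp add: prod.reindex[OF injc] jj_def ll_def)
  also have "\<dots> = (\<Prod>a\<in>c ` I. ennreal (\<Gamma> (fst a) * \<delta>))"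
    by (rule IL1[OF d]) (simp add: finI)
  also have "\<dots> = (\<Prod>k\<in>I. ennreal (\<Gamma> (jj k) * \<delta>))"
    by (simp add: prod.reindex[OF injc] jj_def)
  finally show ?thesis unfolding rhs by simp
qed

end

lemma emeasure_lborel_shift:
  fixes U :: "real set" assumes U: "U \<in> sets borel"
  shows "emeasure lborel {x. x - a \<in> U} = emeasure lborel U"
proof -
  have "emeasure (distr lborel borel ((+) (-a))) U = emeasure lborel ((+) (-a) -` U \<inter> space lborel)"
    using U by (intro emeasure_distr) auto
  moreover have "(+) (-a) -` U \<inter> space lborel = {x. x - a \<in> U}" by auto
  ultimately show ?thesis by (simp add: lborel_distr_plus)
qed

lemma cell_sum:
  assumes d: "0 < \<delta>" and S: "S \<in> sets borel" and L: "\<And>l. l \<in> L \<Longrightarrow> cell \<delta> l \<subseteq> S"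
  shows "(\<integral>\<^sup>+l. ennreal \<delta> \<partial>count_space L) \<le> emeasure lborel S"
proof -
  have "emeasure lborel (\<Union>l\<in>L. cell \<delta> l) = (\<integral>\<^sup>+l. emeasure lborel (cell \<delta> l) \<partial>count_space L)"
    by (rule emeasure_UN_countable) (auto simp: disjoint_family_on_def cell_disj[OF d], simp add: cell_def)
  also have "\<dots> = (\<integral>\<^sup>+l. ennreal \<delta> \<partial>count_space L)"
    by (rule nn_integral_cong) (use d in \<open>simp add: cell_def algebra_simps\<close>)
  finally have "(\<integral>\<^sup>+l. ennreal \<delta> \<partial>count_space L) = emeasure lborel (\<Union>l\<in>L. cell \<delta> l)" by simp
  also have "\<dots> \<le> emeasure lborel S"
    by (rule emeasure_mono) (use L S in auto)
  finally show ?thesis .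
qed

context bw begin

definition compat :: "real \<Rightarrow> real \<Rightarrow> int \<Rightarrow> ('i \<times> real) set \<Rightarrow> 'i \<Rightarrow> int \<Rightarrow> bool" where
  "compat \<rho> \<delta> l v j' l' \<longleftrightarrow> (\<exists>s\<in>cell \<delta> l. \<exists>t\<in>cell \<delta> l'. cball (t - s) \<rho> \<subseteq> U v j')"

lemma cgeo:
  assumes d: "0 < \<delta>" and r: "2 * \<delta> \<le> \<rho>" and c: "compat \<rho> \<delta> l v j' l'"
  shows "l' < l" and "cell \<delta> l' \<subseteq> {x. x - of_int l * \<delta> \<in> U v j'}"
proof -
  obtain s t where s: "s \<in> cell \<delta> l" and t: "t \<in> cell \<delta> l'" and b: "cball (t - s) \<rho> \<subseteq> U v j'"
    using c unfolding compat_def by blast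
  have "t - s + \<rho> \<in> cball (t - s) \<rho>" using r d by (simp add: dist_real_def)
  then have "t - s + \<rho> \<in> U v j'" using b by auto
  then have "t - s + \<rho> < 0" using U_neg[of v j'] by auto
  moreover have "of_int l' * \<delta> < t" "s \<le> (of_int l + 1) * \<delta>" using s t by (auto simp: cell_def)
  ultimately have "of_int l' * \<delta> < (of_int l - 1) * \<delta>" using r by (simp add: algebra_simps)
  then have "of_int l' < (of_int l - 1 :: real)" using d by (simp add: mult_less_cancel_right)
  then show "l' < l" by linarith
  show "cell \<delta> l' \<subseteq> {x. x - of_int l * \<delta> \<in> U v j'}"
  proof
    fix x assume x: "x \<in> cell \<delta> l'"
    have "\<bar>(x - of_int l * \<delta>) - (t - s)\<bar> \<le> 2 * \<delta>"
      using x t s unfolding cell_def by (auto simp: algebra_simps abs_le_iff)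
    then have "x - of_int l * \<delta> \<in> cball (t - s) \<rho>" using r by (simp add: dist_real_def abs_minus_commute)
    then show "x \<in> {x. x - of_int l * \<delta> \<in> U v j'}" using b by auto
  qed
qed

lemma compat_sum:
  assumes d: "0 < \<delta>" and r: "2 * \<delta> \<le> \<rho>"
  shows "(\<integral>\<^sup>+l'. ennreal \<delta> \<partial>count_space {l'. compat \<rho> \<delta> l v j' l'}) \<le> emeasure lborel (U v j')"
proof -
  have Ub: "U v j' \<in> sets borel" using U_open by simp
  have "(\<integral>\<^sup>+l'. ennreal \<delta> \<partial>count_space {l'. compat \<rho> \<delta> l v j' l'}) \<le> emeasure lborel {x. x - of_int l * \<delta> \<in> U v j'}"
  proof (rule cell_sum[OF d])
    show "{x. x - of_int l * \<delta> \<in> U v j'} \<in> sets borel"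
    proof -
      have "(\<lambda>x::real. x - of_int l * \<delta>) \<in> borel_measurable borel" by simp
      from measurable_sets[OF this Ub] show ?thesis by (simp add: vimage_def)
    qed
  qed (use cgeo(2)[OF d r] in auto)
  also have "\<dots> = emeasure lborel (U v j')" by (rule emeasure_lborel_shift[OF Ub])
  finally show ?thesis .
qed

primrec Zrec :: "real \<Rightarrow> real \<Rightarrow> nat \<Rightarrow> 'i \<times> int \<Rightarrow> (('i \<times> int) \<times> ('i \<times> real) set set) list \<Rightarrow> 'w \<Rightarrow> ennreal" where
  "Zrec \<rho> \<delta> 0 c acc \<omega> = prod_list (map (\<lambda>x. X \<delta> (fst (fst x)) (snd (fst x)) (snd x) \<omega>) (acc @ [(c, UNIV)]))"
| "Zrec \<rho> \<delta> (Suc n) c acc \<omega> =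
    (\<integral>\<^sup>+v. (\<integral>\<^sup>+j'. (\<integral>\<^sup>+l'. Zrec \<rho> \<delta> n (j', l') (acc @ [(c, {v})]) \<omega>
        \<partial>count_space {l'. compat \<rho> \<delta> (snd c) v j' l'}) \<partial>count_space UNIV) \<partial>count_space (set_pmf (lam (fst c))))"

lemma prod_list_X_meas: "(\<lambda>\<omega>. prod_list (map (\<lambda>x. X \<delta> (fst (fst x)) (snd (fst x)) (snd x) \<omega>) xs)) \<in> borel_measurable M"
  unfolding prod_list_nth by (rule borel_measurable_prod_ennreal) (rule X_meas)

lemma Zrec_meas: "Zrec \<rho> \<delta> n c acc \<in> borel_measurable M"
proof (induction n arbitrary: c acc)
  case 0
  have eq: "Zrec \<rho> \<delta> 0 c acc = (\<lambda>\<omega>. prod_list (map (\<lambda>x. X \<delta> (fst (fst x)) (snd (fst x)) (snd x) \<omega>) (acc @ [(c, UNIV)])))"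
    by (rule ext) (simp only: Zrec.simps)
  show ?case unfolding eq by (rule prod_list_X_meas)
next
  case (Suc n)
  show ?case unfolding Zrec.simps[abs_def]
    by (intro measurable_count_sum) (auto intro: Suc)
qed

definition W :: "real \<Rightarrow> (('i \<times> int) \<times> ('i \<times> real) set set) list \<Rightarrow> ennreal" where
  "W \<delta> acc = prod_list (map (\<lambda>x. ennreal (\<Gamma> (fst (fst x)) * \<delta>) * ennreal (measure_pmf.prob (lam (fst (fst x))) (snd x))) acc)"

lemma BL:
  assumes d: "0 < \<delta>" and r: "2 * \<delta> \<le> \<rho>"
  shows "distinct (map fst acc) \<Longrightarrow> (\<forall>x\<in>set acc. snd (fst x) > snd c) \<Longrightarrow>
     (\<forall>x\<in>set acc. snd x = UNIV \<or> (\<exists>v. snd x = {v})) \<Longrightarrow>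
     (\<integral>\<^sup>+\<omega>. Zrec \<rho> \<delta> n c acc \<omega> \<partial>M) \<le> W \<delta> acc * ennreal (\<Gamma> (fst c) * \<delta>) * ennreal q ^ n"
proof (induction n arbitrary: c acc)
  case 0
  have nc: "c \<notin> fst ` set acc" using "0.prems"(2) by auto
  have "(\<integral>\<^sup>+\<omega>. Zrec \<rho> \<delta> 0 c acc \<omega> \<partial>M) \<le> W \<delta> (acc @ [(c, UNIV)])"
    unfolding Zrec.simps W_def
    by (rule KL[OF d]) (use "0.prems" nc in auto)
  then show ?case by (simp add: W_def)
next
  case (Suc n)
  obtain j l where c: "c = (j, l)" by (cases c)
  define acc' where "acc' v = acc @ [(c, {v})]" for v :: "('i \<times> real) set"
  have nc: "c \<notin> fst ` set acc" using Suc.prems(2) by auto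
  have IH: "(\<integral>\<^sup>+\<omega>. Zrec \<rho> \<delta> n (j', l') (acc' v) \<omega> \<partial>M) \<le> W \<delta> (acc' v) * ennreal (\<Gamma> j' * \<delta>) * ennreal q ^ n"
    if "compat \<rho> \<delta> l v j' l'" for v j' l'
  proof -
    have "l' < l" using cgeo(1)[OF d r that] .
    then have p2: "\<forall>x\<in>set (acc' v). snd (fst x) > snd (j', l')"
      using Suc.prems(2) c by (auto simp: acc'_def)
    have p1: "distinct (map fst (acc' v))" using Suc.prems(1) nc by (simp add: acc'_def)
    have p3: "\<forall>x\<in>set (acc' v). snd x = UNIV \<or> (\<exists>v. snd x = {v})"
      using Suc.prems(3) by (auto simp: acc'_def)
    show ?thesis using Suc.IH[OF p1 p2 p3] by simp
  qed
  have Wacc': "W \<delta> (acc' v) = W \<delta> acc * ennreal (\<Gamma> j * \<delta>) * ennreal (pmf (lam j) v)" for v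
    by (simp add: acc'_def W_def c measure_pmf_single mult.assoc)
  have m1: "\<And>v j' l'. (\<lambda>\<omega>. Zrec \<rho> \<delta> n (j', l') (acc' v) \<omega>) \<in> borel_measurable M"
    using Zrec_meas by (simp add: fun_eq_iff[symmetric])
  have m2: "\<And>v j'. (\<lambda>\<omega>. \<integral>\<^sup>+l'. Zrec \<rho> \<delta> n (j', l') (acc' v) \<omega> \<partial>count_space {l'. compat \<rho> \<delta> l v j' l'}) \<in> borel_measurable M"
    by (rule measurable_count_sum) (auto intro: m1)
  have m3: "\<And>v. (\<lambda>\<omega>. \<integral>\<^sup>+j'. \<integral>\<^sup>+l'. Zrec \<rho> \<delta> n (j', l') (acc' v) \<omega> \<partial>count_space {l'. compat \<rho> \<delta> l v j' l'} \<partial>count_space UNIV) \<in> borel_measurable M"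
    by (rule measurable_count_sum) (auto intro: m2)
  define K where "K = W \<delta> acc * ennreal (\<Gamma> j * \<delta>) * ennreal q ^ n"
  have "(\<integral>\<^sup>+\<omega>. Zrec \<rho> \<delta> (Suc n) c acc \<omega> \<partial>M) =
     (\<integral>\<^sup>+v. (\<integral>\<^sup>+j'. (\<integral>\<^sup>+l'. (\<integral>\<^sup>+\<omega>. Zrec \<rho> \<delta> n (j', l') (acc' v) \<omega> \<partial>M)
        \<partial>count_space {l'. compat \<rho> \<delta> l v j' l'}) \<partial>count_space UNIV) \<partial>count_space (set_pmf (lam j)))"
  proof -
    have e0: "Zrec \<rho> \<delta> (Suc n) c acc \<omega> = (\<integral>\<^sup>+v. (\<integral>\<^sup>+j'. (\<integral>\<^sup>+l'. Zrec \<rho> \<delta> n (j', l') (acc' v) \<omega>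
        \<partial>count_space {l'. compat \<rho> \<delta> l v j' l'}) \<partial>count_space UNIV) \<partial>count_space (set_pmf (lam j)))" for \<omega>
      by (simp only: Zrec.simps c fst_conv snd_conv acc'_def)
    have "(\<integral>\<^sup>+\<omega>. Zrec \<rho> \<delta> (Suc n) c acc \<omega> \<partial>M) = (\<integral>\<^sup>+\<omega>. (\<integral>\<^sup>+v. (\<integral>\<^sup>+j'. (\<integral>\<^sup>+l'. Zrec \<rho> \<delta> n (j', l') (acc' v) \<omega>
        \<partial>count_space {l'. compat \<rho> \<delta> l v j' l'}) \<partial>count_space UNIV) \<partial>count_space (set_pmf (lam j))) \<partial>M)"
      by (simp only: e0)
    also have "\<dots> = (\<integral>\<^sup>+v. (\<integral>\<^sup>+\<omega>. (\<integral>\<^sup>+j'. (\<integral>\<^sup>+l'. Zrec \<rho> \<delta> n (j', l') (acc' v) \<omega>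
        \<partial>count_space {l'. compat \<rho> \<delta> l v j' l'}) \<partial>count_space UNIV) \<partial>M) \<partial>count_space (set_pmf (lam j)))"
      by (rule nn_integral_count_space_nn_integral) (simp_all add: m3)
    also have "\<dots> = (\<integral>\<^sup>+v. (\<integral>\<^sup>+j'. (\<integral>\<^sup>+\<omega>. (\<integral>\<^sup>+l'. Zrec \<rho> \<delta> n (j', l') (acc' v) \<omega>
        \<partial>count_space {l'. compat \<rho> \<delta> l v j' l'}) \<partial>M) \<partial>count_space UNIV) \<partial>count_space (set_pmf (lam j)))"
      by (intro nn_integral_cong nn_integral_count_space_nn_integral) (simp_all add: m2)
    also have "\<dots> = (\<integral>\<^sup>+v. (\<integral>\<^sup>+j'. (\<integral>\<^sup>+l'. (\<integral>\<^sup>+\<omega>. Zrec \<rho> \<delta> n (j', l') (acc' v) \<omega> \<partial>M)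
        \<partial>count_space {l'. compat \<rho> \<delta> l v j' l'}) \<partial>count_space UNIV) \<partial>count_space (set_pmf (lam j)))"
      by (intro nn_integral_cong nn_integral_count_space_nn_integral) (simp_all add: m1)
    finally show ?thesis .
  qed
  also have "\<dots> \<le> (\<integral>\<^sup>+v. (\<integral>\<^sup>+j'. (\<integral>\<^sup>+l'. (K * ennreal (pmf (lam j) v) * ennreal (\<Gamma> j')) * ennreal \<delta>
        \<partial>count_space {l'. compat \<rho> \<delta> l v j' l'}) \<partial>count_space UNIV) \<partial>count_space (set_pmf (lam j)))"
  proof (intro nn_integral_mono)
    fix v j' l' assume "l' \<in> space (count_space {l'. compat \<rho> \<delta> l v j' l'})"
    then have cp: "compat \<rho> \<delta> l v j' l'" by simp
    have "W \<delta> (acc' v) * ennreal (\<Gamma> j' * \<delta>) * ennreal q ^ n = (K * ennreal (pmf (lam j) v) * ennreal (\<Gamma> j')) * ennreal \<delta>"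
      using Gpos[of j'] d by (simp add: Wacc' K_def ennreal_mult' ac_simps)
    then show "(\<integral>\<^sup>+\<omega>. Zrec \<rho> \<delta> n (j', l') (acc' v) \<omega> \<partial>M) \<le> (K * ennreal (pmf (lam j) v) * ennreal (\<Gamma> j')) * ennreal \<delta>"
      using IH[OF cp] by simp
  qed
  also have "\<dots> = (\<integral>\<^sup>+v. (\<integral>\<^sup>+j'. (K * ennreal (pmf (lam j) v) * ennreal (\<Gamma> j')) * (\<integral>\<^sup>+l'. ennreal \<delta>
        \<partial>count_space {l'. compat \<rho> \<delta> l v j' l'}) \<partial>count_space UNIV) \<partial>count_space (set_pmf (lam j)))"
    by (simp add: nn_integral_cmult mult.assoc)
  also have "\<dots> \<le> (\<integral>\<^sup>+v. (\<integral>\<^sup>+j'. (K * ennreal (pmf (lam j) v)) * (ennreal (\<Gamma> j') * emeasure lborel (U v j'))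
        \<partial>count_space UNIV) \<partial>count_space (set_pmf (lam j)))"
  proof (intro nn_integral_mono)
    fix v j'
    have "(K * ennreal (pmf (lam j) v) * ennreal (\<Gamma> j')) * (\<integral>\<^sup>+l'. ennreal \<delta> \<partial>count_space {l'. compat \<rho> \<delta> l v j' l'})
       \<le> (K * ennreal (pmf (lam j) v) * ennreal (\<Gamma> j')) * emeasure lborel (U v j')"
      by (rule mult_left_mono[OF compat_sum[OF d r]]) simp
    then show "(K * ennreal (pmf (lam j) v) * ennreal (\<Gamma> j')) * (\<integral>\<^sup>+l'. ennreal \<delta> \<partial>count_space {l'. compat \<rho> \<delta> l v j' l'})
       \<le> (K * ennreal (pmf (lam j) v)) * (ennreal (\<Gamma> j') * emeasure lborel (U v j'))"
      by (simp add: ac_simps)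
  qed
  also have "\<dots> = K * (\<integral>\<^sup>+v. ennreal (pmf (lam j) v) * (\<integral>\<^sup>+j'. ennreal (\<Gamma> j') * emeasure lborel (U v j')
        \<partial>count_space UNIV) \<partial>count_space (set_pmf (lam j)))"
    by (simp add: nn_integral_cmult mult.assoc)
  also have "\<dots> \<le> K * ennreal q"
    by (rule mult_left_mono[OF U_bound]) simp
  also have "\<dots> = W \<delta> acc * ennreal (\<Gamma> (fst c) * \<delta>) * ennreal q ^ Suc n"
    by (simp add: K_def c ac_simps)
  finally show ?case .
qed

definition Ztot :: "real \<Rightarrow> real \<Rightarrow> nat \<Rightarrow> 'i \<Rightarrow> real \<Rightarrow> 'w \<Rightarrow> ennreal" where
  "Ztot \<rho> \<delta> n i K \<omega> = (\<integral>\<^sup>+l0. Zrec \<rho> \<delta> n (i, l0) [] \<omega> \<partial>count_space {l0. cell \<delta> l0 \<inter> {-K..K} \<noteq> {}})"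

lemma Ztot_meas: "Ztot \<rho> \<delta> n i K \<in> borel_measurable M"
  unfolding Ztot_def[abs_def]
  by (rule measurable_count_sum) (auto intro: Zrec_meas[unfolded fun_eq_iff[symmetric]])

lemma Ztot_bound:
  assumes d: "0 < \<delta>" "\<delta> \<le> 1" and r: "2 * \<delta> \<le> \<rho>" and K: "0 \<le> K"
  shows "(\<integral>\<^sup>+\<omega>. Ztot \<rho> \<delta> n i K \<omega> \<partial>M) \<le> ennreal (\<Gamma> i) * ennreal (2 * K + 2) * ennreal q ^ n"
proof -
  define R where "R = {l0. cell \<delta> l0 \<inter> {-K..K} \<noteq> {}}"
  have "(\<integral>\<^sup>+\<omega>. Ztot \<rho> \<delta> n i K \<omega> \<partial>M) = (\<integral>\<^sup>+l0. (\<integral>\<^sup>+\<omega>. Zrec \<rho> \<delta> n (i, l0) [] \<omega> \<partial>M) \<partial>count_space R)"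
    unfolding Ztot_def R_def
    by (rule nn_integral_count_space_nn_integral) (auto intro: Zrec_meas[unfolded fun_eq_iff[symmetric]])
  also have "\<dots> \<le> (\<integral>\<^sup>+l0. (ennreal (\<Gamma> i) * ennreal q ^ n) * ennreal \<delta> \<partial>count_space R)"
  proof (rule nn_integral_mono)
    fix l0
    have "(\<integral>\<^sup>+\<omega>. Zrec \<rho> \<delta> n (i, l0) [] \<omega> \<partial>M) \<le> W \<delta> [] * ennreal (\<Gamma> i * \<delta>) * ennreal q ^ n"
      using BL[OF d(1) r, of "[]" "(i, l0)" n] by simp
    then show "(\<integral>\<^sup>+\<omega>. Zrec \<rho> \<delta> n (i, l0) [] \<omega> \<partial>M) \<le> (ennreal (\<Gamma> i) * ennreal q ^ n) * ennreal \<delta>"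
      using Gpos[of i] d by (simp add: W_def ennreal_mult' ac_simps)
  qed
  also have "\<dots> = (ennreal (\<Gamma> i) * ennreal q ^ n) * (\<integral>\<^sup>+l0. ennreal \<delta> \<partial>count_space R)"
    by (simp add: nn_integral_cmult mult.assoc)
  also have "\<dots> \<le> (ennreal (\<Gamma> i) * ennreal q ^ n) * emeasure lborel {-K-1..K+1}"
  proof (rule mult_left_mono[OF cell_sum[OF d(1)]])
    fix l0 assume "l0 \<in> R"
    then obtain y where y: "y \<in> cell \<delta> l0" "-K \<le> y" "y \<le> K" unfolding R_def by auto
    show "cell \<delta> l0 \<subseteq> {-K-1..K+1}"
    proof
      fix x assume x: "x \<in> cell \<delta> l0"
      have "\<bar>x - y\<bar> \<le> \<delta>" using x y(1) unfolding cell_def by (auto simp: algebra_simps abs_le_iff)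
      then show "x \<in> {-K-1..K+1}" using y d by auto
    qed
  qed auto
  also have "\<dots> = ennreal (\<Gamma> i) * ennreal (2 * K + 2) * ennreal q ^ n"
    using K by (simp add: ac_simps)
  finally show ?thesis .
qed

end

lemma gen_pair_Suc_sub: "fst (gen_pair C1 x (Suc n)) \<subseteq> (\<Union>y\<in>fst (gen_pair C1 x n). C1 y)"
  by (cases "gen_pair C1 x n") (auto simp: Let_def)

lemma path_exists:
  "y \<in> ancestor_gen C1 x n \<Longrightarrow> \<exists>p. p 0 = x \<and> p n = y \<and> (\<forall>k<n. p (Suc k) \<in> C1 (p k))"
proof (induction n arbitrary: y)
  case 0 then show ?case by (auto simp: ancestor_gen_def)
next
  case (Suc n)
  then obtain z where z: "z \<in> ancestor_gen C1 x n" "y \<in> C1 z"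
    using gen_pair_Suc_sub[of C1 x n] by (auto simp: ancestor_gen_def)
  obtain p where p: "p 0 = x" "p n = z" "\<forall>k<n. p (Suc k) \<in> C1 (p k)" using Suc.IH[OF z(1)] by blast
  define p' where "p' = p(Suc n := y)"
  have "p' 0 = x" "p' (Suc n) = y" using p by (auto simp: p'_def)
  moreover have "\<forall>k<Suc n. p' (Suc k) \<in> C1 (p' k)"
  proof (intro allI impI)
    fix k assume "k < Suc n"
    then show "p' (Suc k) \<in> C1 (p' k)"
      using p z by (cases "k = n") (auto simp: p'_def)
  qed
  ultimately show ?case by blast
qed

lemma backward_inf: "\<not> backward_steps C1 x < \<infinity> \<Longrightarrow> ancestor_gen C1 x n \<noteq> {}"
  unfolding backward_steps_def by (auto split: if_splits)

lemma small_radius: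
  assumes "\<forall>k<(n::nat). \<exists>e>(0::real). \<forall>e'. 0 < e' \<and> e' \<le> e \<longrightarrow> P k e'"
  shows "\<exists>e>0. \<forall>e'. 0 < e' \<and> e' \<le> e \<longrightarrow> (\<forall>k<n. P k e')"
  using assms
proof (induction n)
  case 0 then show ?case by (auto intro: exI[of _ 1])
next
  case (Suc n)
  then obtain e1 where e1: "e1 > 0" "\<forall>e'. 0 < e' \<and> e' \<le> e1 \<longrightarrow> (\<forall>k<n. P k e')" by auto
  from Suc.prems obtain e2 where e2: "e2 > 0" "\<forall>e'. 0 < e' \<and> e' \<le> e2 \<longrightarrow> P n e'" by auto
  show ?case
    by (rule exI[of _ "min e1 e2"]) (use e1 e2 less_Suc_eq in auto)
qed

lemma prod_list_ge1: "(\<And>x. x \<in> set xs \<Longrightarrow> (1::ennreal) \<le> x) \<Longrightarrow> 1 \<le> prod_list xs"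
proof (induction xs)
  case Nil then show ?case by simp
next
  case (Cons a xs)
  then have "1 \<le> a" "1 \<le> prod_list xs" by auto
  then have "1 * 1 \<le> a * prod_list xs" by (intro mult_mono) auto
  then show ?case by simp
qed

context bw begin

definition good :: "'w \<Rightarrow> bool" where
  "good \<omega> \<longleftrightarrow> (\<forall>j k. Mk j k \<omega> \<in> set_pmf (lam j))"

definition radok :: "real \<Rightarrow> 'w \<Rightarrow> nat \<Rightarrow> (nat \<Rightarrow> 'i \<times> real) \<Rightarrow> bool" where
  "radok \<rho> \<omega> n p \<longleftrightarrow> (\<forall>k<n. cball (snd (p (Suc k)) - snd (p k)) \<rho> \<subseteq>
       U (Mk (fst (p k)) (point_index (N (fst (p k)) \<omega>) (snd (p k))) \<omega>) (fst (p (Suc k))))"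

lemma Zrec_ge1:
  assumes d: "0 < \<delta>" and g: "good \<omega>"
  shows "p 0 = (j, s) \<Longrightarrow> s \<in> N j \<omega> \<Longrightarrow> s \<in> cell \<delta> l \<Longrightarrow>
    (\<forall>k<n. p (Suc k) \<in> first_ancestors N Mk \<omega> (p k)) \<Longrightarrow> radok \<rho> \<omega> n p \<Longrightarrow>
    (\<forall>x\<in>set acc. 1 \<le> X \<delta> (fst (fst x)) (snd (fst x)) (snd x) \<omega>) \<Longrightarrow>
    1 \<le> Zrec \<rho> \<delta> n (j, l) acc \<omega>"
proof (induction n arbitrary: p j s l acc)
  case 0
  have "1 \<le> X \<delta> j l UNIV \<omega>" by (rule X_ge1[OF d "0.prems"(2,3)]) simp
  then have "1 \<le> prod_list (map (\<lambda>x. X \<delta> (fst (fst x)) (snd (fst x)) (snd x) \<omega>) (acc @ [((j, l), UNIV)]))"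
    using "0.prems"(6) by (intro prod_list_ge1) auto
  then show ?case by (simp only: Zrec.simps)
next
  case (Suc n)
  define v where "v = Mk j (point_index (N j \<omega>) s) \<omega>"
  have vS: "v \<in> set_pmf (lam j)" using g by (simp add: good_def v_def)
  obtain j' t where p1: "p 1 = (j', t)" by (cases "p 1")
  have "p (Suc 0) \<in> first_ancestors N Mk \<omega> (p 0)" using Suc.prems(4) by auto
  then have t: "t \<in> N j' \<omega>" "(j', t - s) \<in> v"
    using p1 Suc.prems(1) by (auto simp: first_ancestors_def v_def)
  define l' where "l' = \<lceil>t / \<delta>\<rceil> - 1"
  have tc: "t \<in> cell \<delta> l'" unfolding l'_def by (rule cell_of[OF d])
  have "cball (snd (p (Suc 0)) - snd (p 0)) \<rho> \<subseteq>
       U (Mk (fst (p 0)) (point_index (N (fst (p 0)) \<omega>) (snd (p 0))) \<omega>) (fst (p (Suc 0)))"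
    using Suc.prems(5) unfolding radok_def by blast
  then have rad0: "cball (t - s) \<rho> \<subseteq> U v j'"
    using p1 Suc.prems(1) by (simp add: v_def)
  have cp: "compat \<rho> \<delta> l v j' l'"
    unfolding compat_def using Suc.prems(3) tc rad0 by blast
  define p' where "p' k = p (Suc k)" for k
  have X1: "1 \<le> X \<delta> j l {v} \<omega>"
    by (rule X_ge1[OF d Suc.prems(2,3)]) (simp add: v_def)
  have IH: "1 \<le> Zrec \<rho> \<delta> n (j', l') (acc @ [((j, l), {v})]) \<omega>"
  proof (rule Suc.IH[of p' j' t])
    show "p' 0 = (j', t)" using p1 by (simp add: p'_def)
    show "t \<in> N j' \<omega>" by (rule t(1))
    show "t \<in> cell \<delta> l'" by (rule tc)
    show "\<forall>k<n. p' (Suc k) \<in> first_ancestors N Mk \<omega> (p' k)" using Suc.prems(4) by (simp add: p'_def)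
    show "radok \<rho> \<omega> n p'" using Suc.prems(5) by (simp add: radok_def p'_def)
    show "\<forall>x\<in>set (acc @ [((j, l), {v})]). 1 \<le> X \<delta> (fst (fst x)) (snd (fst x)) (snd x) \<omega>"
      using Suc.prems(6) X1 by auto
  qed
  have "Zrec \<rho> \<delta> n (j', l') (acc @ [((j, l), {v})]) \<omega>
      \<le> (\<integral>\<^sup>+l''. Zrec \<rho> \<delta> n (j', l'') (acc @ [((j, l), {v})]) \<omega> \<partial>count_space {l''. compat \<rho> \<delta> l v j' l''})"
    by (rule count_space_ge) (simp add: cp)
  also have "\<dots> \<le> (\<integral>\<^sup>+j''. (\<integral>\<^sup>+l''. Zrec \<rho> \<delta> n (j'', l'') (acc @ [((j, l), {v})]) \<omega> \<partial>count_space {l''. compat \<rho> \<delta> l v j'' l''}) \<partial>count_space UNIV)"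
    by (rule count_space_ge[where f="\<lambda>j''. (\<integral>\<^sup>+l''. Zrec \<rho> \<delta> n (j'', l'') (acc @ [((j, l), {v})]) \<omega> \<partial>count_space {l''. compat \<rho> \<delta> l v j'' l''})"]) simp
  also have "\<dots> \<le> Zrec \<rho> \<delta> (Suc n) (j, l) acc \<omega>"
    unfolding Zrec.simps fst_conv snd_conv
    by (rule count_space_ge[where f="\<lambda>v. (\<integral>\<^sup>+j''. (\<integral>\<^sup>+l''. Zrec \<rho> \<delta> n (j'', l'') (acc @ [((j, l), {v})]) \<omega> \<partial>count_space {l''. compat \<rho> \<delta> l v j'' l''}) \<partial>count_space UNIV)"]) (rule vS)
  finally show ?case using IH by simp
qed

lemma radius_exists:
  assumes g: "good \<omega>" and p0: "snd (p 0) \<in> N (fst (p 0)) \<omega>"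
    and path: "\<forall>k<n. p (Suc k) \<in> first_ancestors N Mk \<omega> (p k)"
  shows "\<exists>e>0. \<forall>e'. 0 < e' \<and> e' \<le> e \<longrightarrow> radok e' \<omega> n p"
proof -
  have "\<forall>k<n. \<exists>e>(0::real). \<forall>e'. 0 < e' \<and> e' \<le> e \<longrightarrow>
       cball (snd (p (Suc k)) - snd (p k)) e' \<subseteq> U (Mk (fst (p k)) (point_index (N (fst (p k)) \<omega>) (snd (p k))) \<omega>) (fst (p (Suc k)))"
  proof (intro allI impI)
    fix k assume k: "k < n"
    obtain j s where pk: "p k = (j, s)" by (cases "p k")
    obtain j' t where pk1: "p (Suc k) = (j', t)" by (cases "p (Suc k)")
    define v where "v = Mk j (point_index (N j \<omega>) s) \<omega>"
    have vS: "v \<in> set_pmf (lam j)" using g by (simp add: good_def v_def)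
    have "(j', t - s) \<in> v" using path k pk pk1 by (auto simp: first_ancestors_def v_def)
    then have "t - s \<in> U v j'" using U_sup[OF vS, of j'] by auto
    then obtain e where e: "e > 0" "cball (t - s) e \<subseteq> U v j'"
      using U_open[of v j'] open_contains_cball by blast
    show "\<exists>e>(0::real). \<forall>e'. 0 < e' \<and> e' \<le> e \<longrightarrow>
       cball (snd (p (Suc k)) - snd (p k)) e' \<subseteq> U (Mk (fst (p k)) (point_index (N (fst (p k)) \<omega>) (snd (p k))) \<omega>) (fst (p (Suc k)))"
      using e pk pk1 v_def by (intro exI[of _ e]) (auto dest: cball_subset_cball_iff[THEN iffD2])
  qed
  from small_radius[OF this] show ?thesis unfolding radok_def by blast
qed

end

context bw begin

theorem main_local:
  "AE \<omega> in M. \<forall>i. \<forall>T \<in> N i \<omega>. backward_steps (first_ancestors N Mk \<omega>) (i, T) < \<infinity>"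
proof -
  define rr where "rr r = 1 / real (Suc r)" for r :: nat
  define dd where "dd r = rr r / 2" for r
  have dd: "0 < dd r" "dd r \<le> 1" "2 * dd r \<le> rr r" for r
    by (auto simp: dd_def rr_def field_simps)
  define Y where "Y n i K \<omega> = liminf (\<lambda>r. Ztot (rr r) (dd r) n i (real K) \<omega>)" for n i and K :: nat and \<omega>
  have Ymeas: "Y n i K \<in> borel_measurable M" for n i K
    unfolding Y_def[abs_def] by (rule borel_measurable_liminf) (rule Ztot_meas)
  have EY: "(\<integral>\<^sup>+\<omega>. Y n i K \<omega> \<partial>M) \<le> ennreal (\<Gamma> i) * ennreal (2 * real K + 2) * ennreal q ^ n" for n i K
  proof -
    have "(\<integral>\<^sup>+\<omega>. Y n i K \<omega> \<partial>M) \<le> liminf (\<lambda>r. \<integral>\<^sup>+\<omega>. Ztot (rr r) (dd r) n i (real K) \<omega> \<partial>M)"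
      unfolding Y_def by (rule nn_integral_liminf) (rule Ztot_meas)
    also have "\<dots> \<le> ennreal (\<Gamma> i) * ennreal (2 * real K + 2) * ennreal q ^ n"
    proof (rule Liminf_le)
      show "\<forall>\<^sub>F r in sequentially. (\<integral>\<^sup>+\<omega>. Ztot (rr r) (dd r) n i (real K) \<omega> \<partial>M) \<le> ennreal (\<Gamma> i) * ennreal (2 * real K + 2) * ennreal q ^ n"
      proof (rule always_eventually, rule allI)
        fix r
        show "(\<integral>\<^sup>+\<omega>. Ztot (rr r) (dd r) n i (real K) \<omega> \<partial>M) \<le> ennreal (\<Gamma> i) * ennreal (2 * real K + 2) * ennreal q ^ n"
          by (rule Ztot_bound[OF dd(1)[of r] dd(2)[of r] dd(3)[of r] of_nat_0_le_iff])
      qed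
    qed simp
    finally show ?thesis .
  qed
  define B where "B n i K = {\<omega> \<in> space M. 1 \<le> Y n i K \<omega>}" for n i K
  have Bs: "B n i K \<in> sets M" for n i K
  proof -
    have "Y n i K -` {1..} \<inter> space M \<in> sets M" by (rule measurable_sets[OF Ymeas]) simp
    moreover have "Y n i K -` {1..} \<inter> space M = B n i K" by (auto simp: B_def)
    ultimately show ?thesis by simp
  qed
  have EB: "emeasure M (B n i K) \<le> ennreal (\<Gamma> i * (2 * real K + 2) * q ^ n)" for n i K
  proof -
    have "emeasure M (B n i K) = (\<integral>\<^sup>+\<omega>. indicator (B n i K) \<omega> \<partial>M)"
      using Bs by simp
    also have "\<dots> \<le> (\<integral>\<^sup>+\<omega>. Y n i K \<omega> \<partial>M)"
      by (rule nn_integral_mono) (auto simp: B_def split: split_indicator)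
    also have "\<dots> \<le> ennreal (\<Gamma> i) * ennreal (2 * real K + 2) * ennreal q ^ n" by (rule EY)
    also have "\<dots> = ennreal (\<Gamma> i * (2 * real K + 2) * q ^ n)"
      using Gpos[of i] q_nonneg by (simp add: ennreal_mult' ennreal_power)
    finally show ?thesis .
  qed
  define Nul where "Nul i K = (\<Inter>n. B n i K)" for i K
  have Nul_null: "Nul i K \<in> null_sets M" for i K
  proof
    show "Nul i K \<in> sets M" unfolding Nul_def using Bs by auto
    have lim: "(\<lambda>n. ennreal (\<Gamma> i * (2 * real K + 2) * q ^ n)) \<longlonglongrightarrow> ennreal 0"
    proof (rule tendsto_ennrealI)
      have "(\<lambda>n. q ^ n) \<longlonglongrightarrow> 0" using q_nonneg q_lt by (intro LIMSEQ_power_zero) simp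
      then show "(\<lambda>n. \<Gamma> i * (2 * real K + 2) * q ^ n) \<longlonglongrightarrow> 0"
        by (rule tendsto_mult_right_zero)
    qed
    have "emeasure M (Nul i K) \<le> ennreal (\<Gamma> i * (2 * real K + 2) * q ^ n)" for n
    proof -
      have "emeasure M (Nul i K) \<le> emeasure M (B n i K)"
        by (rule emeasure_mono) (auto simp: Nul_def Bs)
      then show ?thesis using EB[of n i K] by simp
    qed
    then have "emeasure M (Nul i K) \<le> ennreal 0"
      by (intro LIMSEQ_le_const[OF lim]) auto
    then show "emeasure M (Nul i K) = 0" by simp
  qed
  have AEN: "AE \<omega> in M. \<forall>i K. \<omega> \<notin> Nul i K"
    by (simp add: AE_all_countable AE_not_in Nul_null)
  have AEG: "AE \<omega> in M. good \<omega>"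
    using good_AE by (simp add: good_def)
  show ?thesis using AEN AEG AE_space
  proof eventually_elim
    case (elim \<omega>)
    show ?case
    proof (intro allI ballI)
      fix i T assume T: "T \<in> N i \<omega>"
      show "backward_steps (first_ancestors N Mk \<omega>) (i, T) < \<infinity>"
      proof (rule ccontr)
        assume inf: "\<not> backward_steps (first_ancestors N Mk \<omega>) (i, T) < \<infinity>"
        define K where "K = nat \<lceil>\<bar>T\<bar>\<rceil>"
        have TK: "\<bar>T\<bar> \<le> real K" unfolding K_def by linarith
        have "\<omega> \<in> B n i K" for n
        proof -
          have "ancestor_gen (first_ancestors N Mk \<omega>) (i, T) n \<noteq> {}" by (rule backward_inf[OF inf])
          then obtain y where y: "y \<in> ancestor_gen (first_ancestors N Mk \<omega>) (i, T) n"
            by (meson ex_in_conv)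
          obtain p where p: "p 0 = (i, T)" "\<forall>k<n. p (Suc k) \<in> first_ancestors N Mk \<omega> (p k)"
            using path_exists[OF y] by (elim exE conjE) simp
          have p0: "snd (p 0) \<in> N (fst (p 0)) \<omega>" using p(1) T by simp
          obtain e where e: "e > 0" "\<forall>e'. 0 < e' \<and> e' \<le> e \<longrightarrow> radok e' \<omega> n p"
            using radius_exists[OF elim(2) p0 p(2)] by blast
          obtain R where R: "inverse (real (Suc R)) < e" using reals_Archimedean[OF e(1)] by blast
          have ev: "1 \<le> Ztot (rr r) (dd r) n i (real K) \<omega>" if r: "R \<le> r" for r
          proof -
            have "rr r \<le> rr R" unfolding rr_def by (rule divide_left_mono) (use r in auto)
            moreover have "rr R < e" using R by (simp add: rr_def inverse_eq_divide)
            ultimately have "rr r \<le> e" by simp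
            moreover have "0 < rr r" by (simp add: rr_def)
            ultimately have rad: "radok (rr r) \<omega> n p" using e(2) by blast
            define l0 where "l0 = \<lceil>T / dd r\<rceil> - 1"
            have Tc: "T \<in> cell (dd r) l0" unfolding l0_def by (rule cell_of[OF dd(1)])
            have "1 \<le> Zrec (rr r) (dd r) n (i, l0) [] \<omega>"
              by (rule Zrec_ge1[OF dd(1) elim(2) p(1) T Tc p(2) rad]) simp
            also have "\<dots> \<le> Ztot (rr r) (dd r) n i (real K) \<omega>"
              unfolding Ztot_def
            proof (rule count_space_ge[where f="\<lambda>l0. Zrec (rr r) (dd r) n (i, l0) [] \<omega>"])
              have "T \<in> {-real K..real K}" using TK by (simp add: abs_le_iff)
              then show "l0 \<in> {l0. cell (dd r) l0 \<inter> {-real K..real K} \<noteq> {}}" using Tc by blast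
            qed
            finally show ?thesis .
          qed
          have "1 \<le> Y n i K \<omega>"
            unfolding Y_def by (rule Liminf_bounded, rule eventually_sequentiallyI[of R]) (rule ev)
          then show ?thesis using elim(3) by (simp add: B_def)
        qed
        then have "\<omega> \<in> Nul i K" by (simp add: Nul_def)
        then show False using elim(1) by blast
      qed
    qed
  qed
qed

end

lemma nn_le_infsum:
  fixes f :: "'a \<Rightarrow> ennreal"
  assumes S: "countable S" and SA: "S \<subseteq> A"
  shows "(\<integral>\<^sup>+x. f x \<partial>count_space S) \<le> infsum f A"
proof -
  have inf: "infsum f A = (SUP F\<in>{F. finite F \<and> F \<subseteq> A}. sum f F)"
    by (rule nonneg_infsum_complete) simp
  show ?thesis
  proof (cases "finite S")
    case True
    then have "(\<integral>\<^sup>+x. f x \<partial>count_space S) = sum f S" by (simp add: nn_integral_count_space_finite)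
    also have "\<dots> \<le> (SUP F\<in>{F. finite F \<and> F \<subseteq> A}. sum f F)"
      by (rule SUP_upper) (use True SA in auto)
    finally show ?thesis using inf by simp
  next
    case False
    note * = bij_betw_from_nat_into[OF S False]
    have "(\<integral>\<^sup>+x. f x \<partial>count_space S) = (\<Sum>n. f (from_nat_into S n))"
      by (simp add: nn_integral_bij_count_space[symmetric, OF *] nn_integral_count_space_nat)
    also have "\<dots> = (SUP n. \<Sum>i<n. f (from_nat_into S i))" by (rule suminf_eq_SUP)
    also have "\<dots> \<le> (SUP F\<in>{F. finite F \<and> F \<subseteq> A}. sum f F)"
    proof (rule SUP_least)
      fix n
      have inj: "inj_on (from_nat_into S) {..<n}"
        using * unfolding bij_betw_def by (auto intro: inj_on_subset)
      have "(\<Sum>i<n. f (from_nat_into S i)) = sum f (from_nat_into S ` {..<n})"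
        by (simp add: sum.reindex[OF inj])
      also have "\<dots> \<le> (SUP F\<in>{F. finite F \<and> F \<subseteq> A}. sum f F)"
      proof (rule SUP_upper)
        have "from_nat_into S ` {..<n} \<subseteq> S" using * unfolding bij_betw_def by auto
        then show "from_nat_into S ` {..<n} \<in> {F. finite F \<and> F \<subseteq> A}" using SA by auto
      qed
      finally show "(\<Sum>i<n. f (from_nat_into S i)) \<le> (SUP F\<in>{F. finite F \<and> F \<subseteq> A}. sum f F)" .
    qed
    finally show ?thesis using inf by simp
  qed
qed

lemma geom_to_nat:
  fixes \<epsilon> :: real assumes e: "0 \<le> \<epsilon>"
  shows "(\<integral>\<^sup>+j. ennreal (\<epsilon> / 2 ^ Suc (to_nat (j::'i::countable))) \<partial>count_space UNIV) \<le> ennreal \<epsilon>"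
proof -
  have bij: "bij_betw to_nat (UNIV::'i set) (range (to_nat :: 'i \<Rightarrow> nat))" by (simp add: bij_betw_def)
  have "(\<integral>\<^sup>+j. ennreal (\<epsilon> / 2 ^ Suc (to_nat (j::'i))) \<partial>count_space UNIV) =
        (\<integral>\<^sup>+n. ennreal (\<epsilon> / 2 ^ Suc n) \<partial>count_space (range (to_nat :: 'i \<Rightarrow> nat)))"
    by (rule nn_integral_bij_count_space[OF bij])
  also have "\<dots> = (\<integral>\<^sup>+n. ennreal (\<epsilon> / 2 ^ Suc n) * indicator (range (to_nat :: 'i \<Rightarrow> nat)) n \<partial>count_space UNIV)"
    by (simp add: nn_integral_count_space_indicator)
  also have "\<dots> \<le> (\<integral>\<^sup>+n. ennreal (\<epsilon> / 2 ^ Suc n) \<partial>count_space UNIV)"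
    by (rule nn_integral_mono) (simp split: split_indicator)
  also have "\<dots> = (\<Sum>n. ennreal (\<epsilon> / 2 ^ Suc n))" by (rule nn_integral_count_space_nat)
  also have "(\<lambda>n. \<epsilon> / 2 ^ Suc n) sums \<epsilon>"
    using sums_mult[OF power_half_series, of \<epsilon>] by (simp add: power_divide)
  then have "(\<Sum>n. ennreal (\<epsilon> / 2 ^ Suc n)) = ennreal \<epsilon>"
    using e by (simp add: suminf_ennreal2 sums_summable sums_unique[symmetric])
  finally show ?thesis by simp
qed

theorem mainTheorem6:
  fixes M :: "'w measure"
    and \<Gamma> :: "'i::countable \<Rightarrow> real"
    and V :: "'i \<Rightarrow> ('i \<times> real) set set"
    and lam :: "'i \<Rightarrow> ('i \<times> real) set pmf"
    and N :: "'i \<Rightarrow> 'w \<Rightarrow> real set"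
    and Mk :: "'i \<Rightarrow> int \<Rightarrow> 'w \<Rightarrow> ('i \<times> real) set"
  assumes Gamma_pos: "\<And>j. 0 < \<Gamma> j"
    and V_countable: "\<And>j. countable (V j)"
    and V_finite_nbhd: "\<And>j v. v \<in> V j \<Longrightarrow> finite_neighborhood v"
    and lam_on_V: "\<And>j. set_pmf (lam j) \<subseteq> V j"
    and setting: "poisson_with_choices M \<Gamma> lam N Mk"
    and gamma_lt_1: "(SUP i. (\<Sum>\<^sub>\<infinity> v\<in>V i. Pmeas \<Gamma> v * ennreal (pmf (lam i) v))) < 1"
  shows "AE \<omega> in M. \<forall>i. \<forall>T \<in> N i \<omega>. backward_steps (first_ancestors N Mk \<omega>) (i, T) < \<infinity>"
proof -
  define g where "g = (SUP i. (\<Sum>\<^sub>\<infinity> v\<in>V i. Pmeas \<Gamma> v * ennreal (pmf (lam i) v)))"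
  have "g < 1" using gamma_lt_1 by (simp add: g_def)
  then obtain g0 where g0: "g = ennreal g0" "0 \<le> g0" "g0 < 1"
    by (metis ennreal_cases ennreal_less_one_iff ennreal_one_less_top less_imp_le not_less_iff_gr_or_eq order.strict_trans)
  define \<epsilon> where "\<epsilon> = (1 - g0) / 2"
  define q where "q = g0 + \<epsilon>"
  have e0: "0 < \<epsilon>" using g0 by (simp add: \<epsilon>_def)
  have q: "0 \<le> q" "q < 1" using g0 by (auto simp: q_def \<epsilon>_def field_simps)
  define sec where "sec v j' = {t. (j', t) \<in> v}" for v :: "('i \<times> real) set" and j'
  define e where "e j' = \<epsilon> / (\<Gamma> j' * 2 ^ Suc (to_nat j'))" for j' :: 'i
  have epos: "0 < e j'" for j' using e0 Gamma_pos[of j'] by (simp add: e_def)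
  define PU where "PU v j' T \<longleftrightarrow> open T \<and> T \<subseteq> {..<0} \<and> (neighborhood v \<longrightarrow> sec v j' \<subseteq> T \<and>
      emeasure lborel T \<le> emeasure lborel (sec v j') + ennreal (e j'))" for v j' T
  define U where "U v j' = (SOME T. PU v j' T)" for v j'
  have exU: "\<exists>T. PU v j' T" for v j'
  proof (cases "neighborhood v")
    case False then show ?thesis by (intro exI[of _ "{}"]) (simp add: PU_def)
  next
    case True
    have sb: "sec v j' \<in> sets borel" and sneg: "sec v j' \<subseteq> {..<0}"
      using True unfolding neighborhood_def sec_def by auto
    have sl: "sec v j' \<in> sets lebesgue" using sb by simp
    obtain T0 where T0: "open T0" "sec v j' \<subseteq> T0" "emeasure lebesgue (T0 - sec v j') < ennreal (e j')"
      using sets_lebesgue_outer_open[OF sl epos[of j']] by metis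
    define T where "T = T0 \<inter> {..<0}"
    have Tb: "T \<in> sets borel" using T0(1) by (simp add: T_def)
    have "emeasure lborel T \<le> emeasure lborel (sec v j' \<union> (T - sec v j'))"
      by (rule emeasure_mono) (use Tb sb in auto)
    also have "\<dots> \<le> emeasure lborel (sec v j') + emeasure lborel (T - sec v j')"
      by (rule emeasure_subadditive) (use Tb sb in auto)
    also have "emeasure lborel (T - sec v j') = emeasure lebesgue (T - sec v j')"
      using Tb sb by simp
    also have "\<dots> \<le> emeasure lebesgue (T0 - sec v j')"
      by (rule emeasure_mono) (use T0(1) sb in \<open>auto simp: T_def\<close>)
    finally have "emeasure lborel T \<le> emeasure lborel (sec v j') + ennreal (e j')"
      using T0(3) by (meson add_left_mono less_imp_le order_trans)
    then show ?thesis using T0 sneg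
      by (intro exI[of _ T]) (auto simp: PU_def T_def)
  qed
  have PU: "PU v j' (U v j')" for v j' unfolding U_def by (rule someI_ex[OF exU])
  have nb: "neighborhood v" if "v \<in> set_pmf (lam j)" for v j
    using V_finite_nbhd lam_on_V that unfolding finite_neighborhood_def by blast
  have Pm: "(\<integral>\<^sup>+j'. ennreal (\<Gamma> j') * emeasure lborel (U v j') \<partial>count_space UNIV) \<le> Pmeas \<Gamma> v + ennreal \<epsilon>"
    if "neighborhood v" for v
  proof -
    have "(\<integral>\<^sup>+j'. ennreal (\<Gamma> j') * emeasure lborel (U v j') \<partial>count_space UNIV)
        \<le> (\<integral>\<^sup>+j'. ennreal (\<Gamma> j') * emeasure lborel (sec v j') + ennreal (\<epsilon> / 2 ^ Suc (to_nat j')) \<partial>count_space UNIV)"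
    proof (rule nn_integral_mono)
      fix j'
      have "ennreal (\<Gamma> j') * emeasure lborel (U v j') \<le> ennreal (\<Gamma> j') * (emeasure lborel (sec v j') + ennreal (e j'))"
        using PU[of v j'] that by (intro mult_left_mono) (auto simp: PU_def)
      also have "\<dots> = ennreal (\<Gamma> j') * emeasure lborel (sec v j') + ennreal (\<epsilon> / 2 ^ Suc (to_nat j'))"
        using Gamma_pos[of j'] epos[of j'] by (simp add: distrib_left ennreal_mult'[symmetric] e_def)
      finally show "ennreal (\<Gamma> j') * emeasure lborel (U v j') \<le> ennreal (\<Gamma> j') * emeasure lborel (sec v j') + ennreal (\<epsilon> / 2 ^ Suc (to_nat j'))" .
    qed
    also have "\<dots> = (\<integral>\<^sup>+j'. ennreal (\<Gamma> j') * emeasure lborel (sec v j') \<partial>count_space UNIV) +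
                   (\<integral>\<^sup>+j'. ennreal (\<epsilon> / 2 ^ Suc (to_nat (j'::'i))) \<partial>count_space UNIV)"
      by (subst nn_integral_add) auto
    also have "\<dots> \<le> Pmeas \<Gamma> v + ennreal \<epsilon>"
    proof (rule add_mono)
      show "(\<integral>\<^sup>+j'. ennreal (\<Gamma> j') * emeasure lborel (sec v j') \<partial>count_space UNIV) \<le> Pmeas \<Gamma> v"
        unfolding Pmeas_def sec_def by (rule nn_le_infsum) auto
      show "(\<integral>\<^sup>+j'. ennreal (\<epsilon> / 2 ^ Suc (to_nat (j'::'i))) \<partial>count_space UNIV) \<le> ennreal \<epsilon>"
        by (rule geom_to_nat) (use e0 in simp)
    qed
    finally show ?thesis .
  qed
  have Ub: "(\<integral>\<^sup>+v. ennreal (pmf (lam j) v) *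
         (\<integral>\<^sup>+j'. ennreal (\<Gamma> j') * emeasure lborel (U v j') \<partial>count_space UNIV)
         \<partial>count_space (set_pmf (lam j))) \<le> ennreal q" for j
  proof -
    have "(\<integral>\<^sup>+v. ennreal (pmf (lam j) v) * (\<integral>\<^sup>+j'. ennreal (\<Gamma> j') * emeasure lborel (U v j') \<partial>count_space UNIV)
         \<partial>count_space (set_pmf (lam j)))
       \<le> (\<integral>\<^sup>+v. Pmeas \<Gamma> v * ennreal (pmf (lam j) v) + ennreal \<epsilon> * ennreal (pmf (lam j) v) \<partial>count_space (set_pmf (lam j)))"
    proof (rule nn_integral_mono)
      fix v assume "v \<in> space (count_space (set_pmf (lam j)))"
      then have "neighborhood v" using nb by auto
      then have "ennreal (pmf (lam j) v) * (\<integral>\<^sup>+j'. ennreal (\<Gamma> j') * emeasure lborel (U v j') \<partial>count_space UNIV)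
          \<le> ennreal (pmf (lam j) v) * (Pmeas \<Gamma> v + ennreal \<epsilon>)"
        by (intro mult_left_mono Pm) auto
      then show "ennreal (pmf (lam j) v) * (\<integral>\<^sup>+j'. ennreal (\<Gamma> j') * emeasure lborel (U v j') \<partial>count_space UNIV)
          \<le> Pmeas \<Gamma> v * ennreal (pmf (lam j) v) + ennreal \<epsilon> * ennreal (pmf (lam j) v)"
        by (simp add: distrib_left ac_simps)
    qed
    also have "\<dots> = (\<integral>\<^sup>+v. Pmeas \<Gamma> v * ennreal (pmf (lam j) v) \<partial>count_space (set_pmf (lam j))) +
                   ennreal \<epsilon> * (\<integral>\<^sup>+v. ennreal (pmf (lam j) v) \<partial>count_space (set_pmf (lam j)))"
      by (simp add: nn_integral_add nn_integral_cmult)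
    also have "(\<integral>\<^sup>+v. ennreal (pmf (lam j) v) \<partial>count_space (set_pmf (lam j))) = 1"
      by (simp add: nn_integral_pmf emeasure_pmf)
    also have "(\<integral>\<^sup>+v. Pmeas \<Gamma> v * ennreal (pmf (lam j) v) \<partial>count_space (set_pmf (lam j))) \<le> g"
    proof -
      have "(\<integral>\<^sup>+v. Pmeas \<Gamma> v * ennreal (pmf (lam j) v) \<partial>count_space (set_pmf (lam j)))
          \<le> (\<Sum>\<^sub>\<infinity> v\<in>V j. Pmeas \<Gamma> v * ennreal (pmf (lam j) v))"
        by (rule nn_le_infsum[OF countable_set_pmf lam_on_V])
      also have "\<dots> \<le> g" unfolding g_def by (rule SUP_upper) simp
      finally show ?thesis .
    qed
    then have "(\<integral>\<^sup>+v. Pmeas \<Gamma> v * ennreal (pmf (lam j) v) \<partial>count_space (set_pmf (lam j))) + ennreal \<epsilon> * 1 \<le> g + ennreal \<epsilon>"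
      by simp
    also have "g + ennreal \<epsilon> = ennreal q" using g0 e0 by (simp add: q_def ennreal_plus)
    finally show ?thesis .
  qed
  have ps: "prob_space M" using setting unfolding poisson_with_choices_def by blast
  have "bw M \<Gamma> lam N Mk U q"
  proof (intro bw.intro bw_axioms.intro)
    show "prob_space M" by (rule ps)
    show "\<And>j. 0 < \<Gamma> j" by (rule Gamma_pos)
    show "poisson_with_choices M \<Gamma> lam N Mk" by (rule setting)
    show "\<And>v j. open (U v j)" using PU by (simp add: PU_def)
    show "\<And>v j. U v j \<subseteq> {..<0}" using PU by (simp add: PU_def)
    show "\<And>j v j'. v \<in> set_pmf (lam j) \<Longrightarrow> {t. (j', t) \<in> v} \<subseteq> U v j'"
      using PU nb unfolding PU_def sec_def by blast
    show "\<And>j. (\<integral>\<^sup>+v. ennreal (pmf (lam j) v) *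
         (\<integral>\<^sup>+j'. ennreal (\<Gamma> j') * emeasure lborel (U v j') \<partial>count_space UNIV)
         \<partial>count_space (set_pmf (lam j))) \<le> ennreal q" by (rule Ub)
    show "0 \<le> q" "q < 1" by (rule q(1), rule q(2))
  qed
  then show ?thesis by (rule bw.main_local)
qed


end
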